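(* $F_\tau'=F_\tau''$, i.e. the commutator subgroup $[F_\tau,F_\tau]$ is equal to its own commutator subgroup.
   Context: Let $\tau=(\sqrt5-1)/2$. $F_\tau$ is the group, under composition, of orientation-preserving homeomorphisms of $[0,1]$ that are piecewise linear with finitely many breakpoints, all breakpoints in $\mathbb{Z}[\tau]=\{a+b\tau:a,b\in\mathbb{Z}\}$ and all slopes integer powers of $\tau$. $F_\tau'=[F_\tau,F_\tau]$ and $F_\tau''=[F_\tau',F_\tau']$. *)

theory Defs
  imports Complex_Main
begin

definition tau :: real where "tau = (sqrt 5 - 1) / 2"

definition Ztau :: "real set" where
  "Ztau = {of_int a + of_int b * tau | a b. True}"

text \<open>Elements of F_tau, represented as maps real to real that are the identity
  outside [0,1] (so composition and inverse are the group operations).\<close>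
definition Ftau :: "(real \<Rightarrow> real) set" where
  "Ftau = {f. (\<forall>x. x \<notin> {0..1} \<longrightarrow> f x = x)
     \<and> continuous_on {0..1} f \<and> strict_mono_on {0..1} f \<and> f ` {0..1} = {0..1}
     \<and> (\<exists>(xs::real list) (ks::int list).
          length xs \<ge> 2 \<and> hd xs = 0 \<and> last xs = 1 \<and> sorted_wrt (<) xs
          \<and> set xs \<subseteq> Ztau \<and> length ks = length xs - 1
          \<and> (\<forall>i < length xs - 1. \<forall>x \<in> {xs!i .. xs!(i+1)}.
                f x = f (xs!i) + tau powi (ks!i) * (x - xs!i)))}"

inductive_set commutator_subgroup :: "(real \<Rightarrow> real) set \<Rightarrow> (real \<Rightarrow> real) set"
  for G :: "(real \<Rightarrow> real) set" where
  cs_id: "id \<in> commutator_subgroup G"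
| cs_comm: "f \<in> G \<Longrightarrow> g \<in> G \<Longrightarrow> f \<circ> g \<circ> inv f \<circ> inv g \<in> commutator_subgroup G"
| cs_comp: "h \<in> commutator_subgroup G \<Longrightarrow> k \<in> commutator_subgroup G \<Longrightarrow> h \<circ> k \<in> commutator_subgroup G"
| cs_inv: "h \<in> commutator_subgroup G \<Longrightarrow> inv h \<in> commutator_subgroup G"

end

theory Submission
  imports Defs
begin


lemma tau_sq: "tau * tau = 1 - tau"
  unfolding tau_def by (simp add: field_simps)

lemma tau_pos: "0 < tau" unfolding tau_def
proof -
  have "1 < sqrt 5" by (rule real_less_rsqrt) auto
  then show "0 < (sqrt 5 - 1) / 2" by simp
qed
lemma tau_lt1: "tau < 1" unfolding tau_def
proof -
  have "sqrt 5 < 3" by (rule real_less_lsqrt) auto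
  then show "(sqrt 5 - 1) / 2 < 1" by simp
qed
lemma tau_inv: "inverse tau = 1 + tau"
  using tau_sq tau_pos by (simp add: field_simps)
lemma tau_sq2: "tau^2 = 1 - tau" using tau_sq by (simp add: power2_eq_square)

lemma Ztau_I: "of_int a + of_int b * tau \<in> Ztau" unfolding Ztau_def by blast
lemma Ztau_E: "x \<in> Ztau \<Longrightarrow> (\<And>a b. x = of_int a + of_int b * tau \<Longrightarrow> P) \<Longrightarrow> P"
  unfolding Ztau_def by blast
lemma Ztau_0[simp]: "0 \<in> Ztau" using Ztau_I[of 0 0] by simp
lemma Ztau_1[simp]: "1 \<in> Ztau" using Ztau_I[of 1 0] by simp
lemma Ztau_tau[simp]: "tau \<in> Ztau" using Ztau_I[of 0 1] by simp
lemma Ztau_add[intro]: "x \<in> Ztau \<Longrightarrow> y \<in> Ztau \<Longrightarrow> x + y \<in> Ztau"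
  apply (erule Ztau_E)+ subgoal for a b c d using Ztau_I[of "a+c" "b+d"] by (simp add: algebra_simps) done
lemma Ztau_uminus[intro]: "x \<in> Ztau \<Longrightarrow> - x \<in> Ztau"
  apply (erule Ztau_E) subgoal for a b using Ztau_I[of "-a" "-b"] by (simp add: algebra_simps) done
lemma Ztau_diff[intro]: "x \<in> Ztau \<Longrightarrow> y \<in> Ztau \<Longrightarrow> x - y \<in> Ztau"
  using Ztau_add[of x "-y"] Ztau_uminus by simp
lemma Ztau_mult[intro]: "x \<in> Ztau \<Longrightarrow> y \<in> Ztau \<Longrightarrow> x * y \<in> Ztau"
proof (erule Ztau_E, erule Ztau_E)
  fix a b c d assume "x = of_int a + of_int b * tau" "y = of_int c + of_int d * tau"
  then have "x * y = of_int a * of_int c + (of_int a * of_int d + of_int b * of_int c) * tau + of_int b * of_int d * (tau * tau)"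
    by (simp add: algebra_simps)
  also have "\<dots> = of_int (a*c + b*d) + of_int (a*d+b*c-b*d) * tau"
    unfolding tau_sq by (simp add: algebra_simps)
  finally have "x * y = of_int (a*c + b*d) + of_int (a*d+b*c-b*d) * tau" .
  then show ?thesis by (simp only: Ztau_I)
qed
lemma Ztau_power[intro]: "x \<in> Ztau \<Longrightarrow> x ^ n \<in> Ztau"
  by (induction n) auto
lemma Ztau_powi[intro]: "tau powi k \<in> Ztau"
proof (cases "k \<ge> 0")
  case True then show ?thesis by (simp add: power_int_nonneg_exp Ztau_power)
next
  case False
  then have "tau powi k = (inverse tau) ^ nat (-k)"
    by (metis power_int_minus power_int_nonneg_exp power_int_inverse neg_0_le_iff_le nle_le minus_minus)
  then show ?thesis using tau_inv by (simp add: Ztau_power Ztau_add)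
qed
lemma tau_powi_pos[simp]: "0 < tau powi k" using tau_pos by simp
lemma tau_powi_ne[simp]: "tau powi k \<noteq> 0" using tau_pos by simp
lemma tau_powi_add: "tau powi (k + j) = tau powi k * tau powi j"
  using tau_pos by (simp add: power_int_add)



definition consec :: "real set \<Rightarrow> real \<Rightarrow> real \<Rightarrow> bool" where
  "consec S a b \<longleftrightarrow> a \<in> S \<and> b \<in> S \<and> a < b \<and> (\<forall>s\<in>S. s \<le> a \<or> b \<le> s)"

definition PLS :: "(real \<Rightarrow> real) \<Rightarrow> real set \<Rightarrow> bool" where
  "PLS f S \<longleftrightarrow> finite S \<and> S \<subseteq> Ztau \<and> S \<subseteq> {0..1} \<and> 0 \<in> S \<and> 1 \<in> S \<and>
    (\<forall>a b. consec S a b \<longrightarrow> (\<exists>k::int. \<forall>x\<in>{a..b}. f x = f a + tau powi k * (x - a)))"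

lemma PLS_D:
  assumes "PLS f S"
  shows "finite S" "S \<subseteq> Ztau" "S \<subseteq> {0..1}" "0 \<in> S" "1 \<in> S"
    "consec S a b \<Longrightarrow> \<exists>k::int. \<forall>x\<in>{a..b}. f x = f a + tau powi k * (x - a)"
  using assms unfolding PLS_def by blast+

lemma cover:
  assumes "finite S" "0 \<in> S" "1 \<in> S" "S \<subseteq> {0..1}" "0 \<le> x" "x < 1"
  shows "\<exists>a b. consec S a b \<and> a \<le> x \<and> x < b"
proof -
  define A where "A = {s\<in>S. s \<le> x}"
  define B where "B = {s\<in>S. x < s}"
  have A: "finite A" "A \<noteq> {}" using assms unfolding A_def by auto
  have B: "finite B" "B \<noteq> {}" using assms unfolding B_def by auto
  let ?a = "Max A" and ?b = "Min B"
  have "?a \<in> A" "?b \<in> B" using A B by auto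
  moreover have "\<forall>s\<in>S. s \<le> ?a \<or> ?b \<le> s"
  proof
    fix s assume "s \<in> S"
    show "s \<le> ?a \<or> ?b \<le> s"
    proof (cases "s \<le> x")
      case True then have "s \<in> A" using \<open>s \<in> S\<close> unfolding A_def by auto
      then show ?thesis using A by auto
    next
      case False then have "s \<in> B" using \<open>s \<in> S\<close> unfolding B_def by auto
      then show ?thesis using B by auto
    qed
  qed
  ultimately show ?thesis unfolding consec_def A_def B_def by force
qed

lemma cover1:
  assumes "finite S" "0 \<in> S" "1 \<in> S" "S \<subseteq> {0..1}"
  shows "\<exists>a. consec S a 1"
proof -
  define A where "A = {s\<in>S. s < 1}"
  have A: "finite A" "A \<noteq> {}" using assms unfolding A_def by auto
  have "Max A \<in> A" using A by auto
  moreover have "\<forall>s\<in>S. s \<le> Max A \<or> 1 \<le> s"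
  proof
    fix s assume "s \<in> S"
    show "s \<le> Max A \<or> 1 \<le> s"
    proof (cases "s < 1")
      case True then have "s \<in> A" using \<open>s \<in> S\<close> unfolding A_def by auto
      then show ?thesis using A by auto
    qed auto
  qed
  ultimately show ?thesis unfolding consec_def A_def using assms by auto
qed

lemma sw_less_iff:
  assumes "sorted_wrt (<) (xs::real list)" "i < length xs" "j < length xs"
  shows "(xs!i < xs!j) = (i < j)"
  using assms sorted_wrt_nth_less[OF assms(1)]
  by (metis linorder_neqE_nat order.asym)

lemma sw_le_iff:
  assumes "sorted_wrt (<) (xs::real list)" "i < length xs" "j < length xs"
  shows "(xs!i \<le> xs!j) = (i \<le> j)"
  using sw_less_iff[OF assms(1,3,2)] by (auto simp: not_less[symmetric])

lemma Ftau_D: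
  assumes "f \<in> Ftau"
  shows "\<And>x. x \<notin> {0..1} \<Longrightarrow> f x = x" "continuous_on {0..1} f" "strict_mono_on {0..1} f"
    "f ` {0..1} = {0..1}"
  using assms unfolding Ftau_def by auto

lemma Ftau_PLS:
  assumes "f \<in> Ftau"
  shows "\<exists>S. PLS f S"
proof -
  obtain xs :: "real list" and ks :: "int list" where
    L: "length xs \<ge> 2" "hd xs = 0" "last xs = 1" "sorted_wrt (<) xs"
    "set xs \<subseteq> Ztau" "length ks = length xs - 1"
    and P: "\<forall>i < length xs - 1. \<forall>x \<in> {xs!i .. xs!(i+1)}.
                f x = f (xs!i) + tau powi (ks!i) * (x - xs!i)"
    using assms unfolding Ftau_def by blast
  let ?n = "length xs"
  have ne: "xs \<noteq> []" using L by auto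
  have h0: "xs!0 = 0" using L ne by (simp add: hd_conv_nth)
  have h1: "xs!(?n - 1) = 1" using L ne by (simp add: last_conv_nth)
  have rng: "set xs \<subseteq> {0..1}"
  proof
    fix s assume "s \<in> set xs"
    then obtain j where j: "j < ?n" "s = xs!j" by (auto simp: in_set_conv_nth)
    have "xs!0 \<le> xs!j" using sw_le_iff[OF L(4), of 0 j] j ne by auto
    moreover have "xs!j \<le> xs!(?n-1)" using sw_le_iff[OF L(4), of j "?n - 1"] j by auto
    ultimately show "s \<in> {0..1}" using h0 h1 j by auto
  qed
  have "PLS f (set xs)"
    unfolding PLS_def
  proof (intro conjI allI impI)
    show "0 \<in> set xs" using h0 ne by (metis nth_mem length_greater_0_conv)
    show "1 \<in> set xs" using h1 ne by (metis nth_mem diff_less length_greater_0_conv zero_less_one)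
    fix a b assume c: "consec (set xs) a b"
    then obtain i j where ij: "i < ?n" "j < ?n" "a = xs!i" "b = xs!j"
      unfolding consec_def by (auto simp: in_set_conv_nth)
    have "i < j" using c ij sw_less_iff[OF L(4) ij(1,2)] unfolding consec_def by auto
    have "j = i + 1"
    proof (rule ccontr)
      assume "j \<noteq> i + 1"
      then have "i + 1 < j" using \<open>i < j\<close> by auto
      then have "xs!i < xs!(i+1)" "xs!(i+1) < xs!j"
        using sw_less_iff[OF L(4)] ij by auto
      moreover have "xs!(i+1) \<in> set xs" using \<open>i+1<j\<close> ij by auto
      ultimately show False using c ij unfolding consec_def by force
    qed
    then have "i < ?n - 1" using ij by auto
    then show "\<exists>k::int. \<forall>x\<in>{a..b}. f x = f a + tau powi k * (x - a)"
      using P ij \<open>j = i + 1\<close> by (intro exI[of _ "ks!i"]) blast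
  qed (use L rng in auto)
  then show ?thesis by blast
qed

lemma PLS_mono:
  assumes "PLS f S"
  shows "x \<in> {0..1} \<Longrightarrow> y \<in> {0..1} \<Longrightarrow> x < y \<Longrightarrow> f x < f y"
proof (induction "card {s\<in>S. x<s \<and> s<y}" arbitrary: x y rule: less_induct)
  case (less x y)
  note S = PLS_D[OF assms]
  show ?case
  proof (cases "\<exists>s\<in>S. x<s \<and> s<y")
    case True
    then obtain s where s: "s \<in> S" "x < s" "s < y" by auto
    have s01: "s \<in> {0..1}" using s S by auto
    have fin: "finite {s\<in>S. x<s \<and> s<y}" using S by auto
    have "card {s'\<in>S. x<s' \<and> s'<s} < card {s\<in>S. x<s \<and> s<y}"
      by (rule psubset_card_mono[OF fin]) (use s in auto)
    then have 1: "f x < f s" using less s s01 by blast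
    have "card {s'\<in>S. s<s' \<and> s'<y} < card {s\<in>S. x<s \<and> s<y}"
      by (rule psubset_card_mono[OF fin]) (use s in auto)
    then have 2: "f s < f y" using less s s01 by blast
    from 1 2 show ?thesis by simp
  next
    case False
    have "x < 1" using less by auto
    have "\<exists>a b. consec S a b \<and> a \<le> x \<and> x < b"
      by (rule cover[OF S(1,4,5,3)]) (use less \<open>x < 1\<close> in auto)
    then obtain a b where ab: "consec S a b" "a \<le> x" "x < b" by blast
    have "y \<le> b"
    proof (rule ccontr)
      assume "\<not> y \<le> b" then show False using False ab unfolding consec_def by auto
    qed
    obtain k where k: "\<forall>x\<in>{a..b}. f x = f a + tau powi k * (x - a)" using S(6)[OF ab(1)] by auto
    have xy: "x \<in> {a..b}" "y \<in> {a..b}" using ab \<open>y \<le> b\<close> less(4) by auto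
    have "f y - f x = tau powi k * (y - x)"
      using k[rule_format, OF xy(1)] k[rule_format, OF xy(2)] by (simp add: algebra_simps)
    moreover have "0 < tau powi k * (y - x)" using less(4) by simp
    ultimately show ?thesis by linarith
  qed
qed

lemma PLS_cont:
  assumes "PLS f S"
  shows "continuous_on {0..1} f"
proof -
  note S = PLS_D[OF assms]
  define I where "I = {(a,b). consec S a b}"
  have finI: "finite I" by (rule finite_subset[of _ "S \<times> S"]) (use S in \<open>auto simp: I_def consec_def\<close>)
  have eq: "{0..1} = (\<Union>i\<in>I. {fst i..snd i})"
  proof
    show "{0..1} \<subseteq> (\<Union>i\<in>I. {fst i..snd i})"
    proof
      fix x :: real assume x: "x \<in> {0..1}"
      show "x \<in> (\<Union>i\<in>I. {fst i..snd i})"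
      proof (cases "x < 1")
        case True
        have "\<exists>a b. consec S a b \<and> a \<le> x \<and> x < b"
          by (rule cover[OF S(1,4,5,3)]) (use x True in auto)
        then obtain a b where "consec S a b" "a \<le> x" "x < b" by blast
        then show ?thesis unfolding I_def by force
      next
        case False
        then obtain a where "consec S a 1" using cover1[OF S(1,4,5,3)] by auto
        then show ?thesis using False x unfolding I_def consec_def by force
      qed
    qed
    show "(\<Union>i\<in>I. {fst i..snd i}) \<subseteq> {0..1}" using S unfolding I_def consec_def by force
  qed
  have "continuous_on (\<Union>i\<in>I. {fst i..snd i}) f"
  proof (rule continuous_on_closed_Union[OF finI])
    fix i assume "i \<in> I"
    then obtain a b where i: "i = (a,b)" "consec S a b" unfolding I_def by auto
    obtain k where k: "\<forall>x\<in>{a..b}. f x = f a + tau powi k * (x - a)" using S(6)[OF i(2)] by auto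
    have "continuous_on {a..b} (\<lambda>x. f a + tau powi k * (x - a))" by (intro continuous_intros)
    moreover have "continuous_on {a..b} f \<longleftrightarrow> continuous_on {a..b} (\<lambda>x. f a + tau powi k * (x - a))"
      by (rule continuous_on_cong) (simp, use k in blast)
    ultimately show "continuous_on {fst i..snd i} f" using i by (simp del: continuous_on_cong)
  qed auto
  then show ?thesis using eq by simp
qed

lemma PLS_Ftau:
  assumes "\<And>x. x \<notin> {0..1} \<Longrightarrow> f x = x" "f 0 = 0" "f 1 = 1" "PLS f S"
  shows "f \<in> Ftau"
proof -
  note S = PLS_D[OF assms(4)]
  have mono: "strict_mono_on {0..1} f" using PLS_mono[OF assms(4)] by (auto simp: strict_mono_on_def)
  have cont: "continuous_on {0..1} f" using PLS_cont[OF assms(4)] .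
  have img: "f ` {0..1} = {0..1}"
  proof
    show "f ` {0..1} \<subseteq> {0..1}"
    proof
      fix y assume "y \<in> f ` {0..1}"
      then obtain x where x: "x \<in> {0..1}" "y = f x" by auto
      have "f 0 \<le> f x" using PLS_mono[OF assms(4), of 0 x] x by (cases "x = 0") auto
      moreover have "f x \<le> f 1" using PLS_mono[OF assms(4), of x 1] x by (cases "x = 1") auto
      ultimately show "y \<in> {0..1}" using x assms by auto
    qed
    show "{0..1} \<subseteq> f ` {0..1}"
    proof
      fix y :: real assume "y \<in> {0..1}"
      then obtain x where "0 \<le> x" "x \<le> 1" "f x = y" using IVT'[of f 0 y 1] cont assms by auto
      then show "y \<in> f ` {0..1}" by auto
    qed
  qed
  define xs where "xs = sorted_list_of_set S"
  have sx: "set xs = S" "sorted_wrt (<) xs" using S(1) unfolding xs_def by auto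
  let ?n = "length xs"
  have "card {0::real,1} \<le> card S" by (rule card_mono) (use S in auto)
  then have n2: "?n \<ge> 2" using S(1) unfolding xs_def by simp
  then have ne: "xs \<noteq> []" by auto
  have rng: "\<And>i. i < ?n \<Longrightarrow> xs!i \<in> {0..1}" using sx S by (metis nth_mem subsetD)
  have h0: "xs!0 = 0"
  proof -
    obtain j where j: "j < ?n" "xs!j = 0" using sx S by (metis in_set_conv_nth)
    have "xs!0 \<le> xs!j" using sw_le_iff[OF sx(2), of 0 j] j ne by auto
    then show ?thesis using rng[of 0] j ne by auto
  qed
  have h1: "xs!(?n - 1) = 1"
  proof -
    obtain j where j: "j < ?n" "xs!j = 1" using sx S by (metis in_set_conv_nth)
    have "xs!j \<le> xs!(?n-1)" using sw_le_iff[OF sx(2), of j "?n - 1"] j by auto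
    then show ?thesis using rng[of "?n - 1"] j ne by auto
  qed
  define ks where "ks = map (\<lambda>i. SOME k::int. \<forall>x\<in>{xs!i..xs!(i+1)}. f x = f (xs!i) + tau powi k * (x - xs!i)) [0..<?n - 1]"
  have P: "\<forall>i < ?n - 1. \<forall>x \<in> {xs!i .. xs!(i+1)}. f x = f (xs!i) + tau powi (ks!i) * (x - xs!i)"
  proof (intro allI impI)
    fix i assume i: "i < ?n - 1"
    have "consec S (xs!i) (xs!(i+1))" unfolding consec_def
    proof (intro conjI ballI)
      show "xs!i \<in> S" "xs!(i+1) \<in> S" using i sx by auto
      show "xs!i < xs!(i+1)" using sw_less_iff[OF sx(2), of i "i+1"] i by auto
      fix s assume "s \<in> S"
      then obtain j where j: "j < ?n" "s = xs!j" using sx by (metis in_set_conv_nth)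
      show "s \<le> xs ! i \<or> xs ! (i + 1) \<le> s"
      proof (cases "j \<le> i")
        case True then show ?thesis using sw_le_iff[OF sx(2), of j i] i j by auto
      next
        case False then show ?thesis using sw_le_iff[OF sx(2), of "i+1" j] i j by auto
      qed
    qed
    then have "\<exists>k::int. \<forall>x\<in>{xs!i..xs!(i+1)}. f x = f (xs!i) + tau powi k * (x - xs!i)"
      using S(6) by blast
    then have "\<forall>x\<in>{xs!i..xs!(i+1)}. f x = f (xs!i) + tau powi (SOME k::int. \<forall>x\<in>{xs!i..xs!(i+1)}. f x = f (xs!i) + tau powi k * (x - xs!i)) * (x - xs!i)"
      by (rule someI_ex)
    moreover have "ks!i = (SOME k::int. \<forall>x\<in>{xs!i..xs!(i+1)}. f x = f (xs!i) + tau powi k * (x - xs!i))"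
      unfolding ks_def using i by simp
    ultimately have "\<forall>x\<in>{xs!i..xs!(i+1)}. f x = f (xs!i) + tau powi (ks!i) * (x - xs!i)"
      by (simp only:)
    then show "\<forall>x \<in> {xs!i .. xs!(i+1)}. f x = f (xs!i) + tau powi (ks!i) * (x - xs!i)" .
  qed
  have "length xs \<ge> 2 \<and> hd xs = 0 \<and> last xs = 1 \<and> sorted_wrt (<) xs
          \<and> set xs \<subseteq> Ztau \<and> length ks = length xs - 1
          \<and> (\<forall>i < length xs - 1. \<forall>x \<in> {xs!i .. xs!(i+1)}.
                f x = f (xs!i) + tau powi (ks!i) * (x - xs!i))"
  proof (intro conjI)
    show "hd xs = 0" using h0 ne by (metis hd_conv_nth)
    show "last xs = 1" using h1 ne by (metis last_conv_nth)
    show "length ks = length xs - 1" unfolding ks_def by (simp only: length_map length_upt)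
    show "set xs \<subseteq> Ztau" using sx S by (simp only:)
  qed (use n2 sx P in \<open>simp_all only:\<close>)
  then have "\<exists>(xs::real list) (ks::int list).
          length xs \<ge> 2 \<and> hd xs = 0 \<and> last xs = 1 \<and> sorted_wrt (<) xs
          \<and> set xs \<subseteq> Ztau \<and> length ks = length xs - 1
          \<and> (\<forall>i < length xs - 1. \<forall>x \<in> {xs!i .. xs!(i+1)}.
                f x = f (xs!i) + tau powi (ks!i) * (x - xs!i))" by blast
  then show ?thesis unfolding Ftau_def using assms(1) mono cont img by (simp only: mem_Collect_eq) blast
qed



lemma Ftau_mono_lt: "f \<in> Ftau \<Longrightarrow> x \<in> {0..1} \<Longrightarrow> y \<in> {0..1} \<Longrightarrow> x < y \<Longrightarrow> f x < f y"
  using Ftau_D(3) by (auto simp: strict_mono_on_def)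
lemma Ftau_mono_le: "f \<in> Ftau \<Longrightarrow> x \<in> {0..1} \<Longrightarrow> y \<in> {0..1} \<Longrightarrow> x \<le> y \<Longrightarrow> f x \<le> f y"
  using Ftau_mono_lt[of f x y] by (cases "x = y") auto
lemma Ftau_mono_rev: "f \<in> Ftau \<Longrightarrow> x \<in> {0..1} \<Longrightarrow> y \<in> {0..1} \<Longrightarrow> f x < f y \<Longrightarrow> x < y"
  using Ftau_mono_le[of f y x] by (cases "y \<le> x") auto
lemma Ftau_range: "f \<in> Ftau \<Longrightarrow> x \<in> {0..1} \<Longrightarrow> f x \<in> {0..1}"
  using Ftau_D(4) by blast

lemma Ftau_0: assumes "f \<in> Ftau" shows "f 0 = 0"
proof -
  obtain x where x: "x \<in> {0..1}" "f x = 0" using Ftau_D(4)[OF assms]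
    by (metis atLeastAtMost_iff imageE order_refl zero_le_one)
  have "f 0 \<in> {0..1}" using Ftau_range[OF assms, of 0] by auto
  moreover have "x = 0 \<or> f 0 < f x" using Ftau_mono_lt[OF assms, of 0 x] x by force
  ultimately show ?thesis using x by auto
qed

lemma Ftau_1: assumes "f \<in> Ftau" shows "f 1 = 1"
proof -
  obtain x where x: "x \<in> {0..1}" "f x = 1" using Ftau_D(4)[OF assms]
    by (metis atLeastAtMost_iff imageE order_refl zero_le_one)
  have "f 1 \<in> {0..1}" using Ftau_range[OF assms, of 1] by auto
  moreover have "x = 1 \<or> f x < f 1" using Ftau_mono_lt[OF assms, of x 1] x by force
  ultimately show ?thesis using x by auto
qed

lemma Ftau_inj: assumes "f \<in> Ftau" shows "inj f"
proof (rule injI)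
  fix x y assume e: "f x = f y"
  note out = Ftau_D(1)[OF assms]
  show "x = y"
  proof (cases "x \<in> {0..1}"; cases "y \<in> {0..1}")
    assume xy: "x \<in> {0..1}" "y \<in> {0..1}"
    have "\<not> x < y"
    proof
      assume "x < y" then have "f x < f y" by (rule Ftau_mono_lt[OF assms xy])
      then show False using e by simp
    qed
    moreover have "\<not> y < x"
    proof
      assume "y < x" then have "f y < f x" by (rule Ftau_mono_lt[OF assms xy(2,1)])
      then show False using e by simp
    qed
    ultimately show ?thesis by linarith
  next
    assume xy: "x \<in> {0..1}" "y \<notin> {0..1}"
    have "f x \<in> {0..1}" by (rule Ftau_range[OF assms xy(1)])
    moreover have "f y = y" by (rule out[OF xy(2)])
    ultimately have False using e xy(2) by simp
    then show ?thesis ..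
  next
    assume xy: "x \<notin> {0..1}" "y \<in> {0..1}"
    have "f y \<in> {0..1}" by (rule Ftau_range[OF assms xy(2)])
    moreover have "f x = x" by (rule out[OF xy(1)])
    ultimately have False using e xy(1) by simp
    then show ?thesis ..
  next
    assume xy: "x \<notin> {0..1}" "y \<notin> {0..1}"
    have "x = f x" using out[OF xy(1)] by simp
    also have "\<dots> = f y" by (rule e)
    also have "\<dots> = y" by (rule out[OF xy(2)])
    finally show ?thesis .
  qed
qed

lemma Ftau_surj: assumes "f \<in> Ftau" shows "surj f"
proof -
  have "y \<in> range f" for y
  proof (cases "y \<in> {0..1}")
    case True then have "y \<in> f ` {0..1}" using Ftau_D(4)[OF assms] by simp
    then show ?thesis by blast
  next
    case False then have "f y = y" by (rule Ftau_D(1)[OF assms])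
    then have "y = f y" by simp
    then show ?thesis by (rule range_eqI)
  qed
  then show ?thesis by blast
qed

lemma Ftau_bij: "f \<in> Ftau \<Longrightarrow> bij f"
  unfolding bij_def using Ftau_inj Ftau_surj by blast

lemma Ztau_aff: "u \<in> Ztau \<Longrightarrow> a \<in> Ztau \<Longrightarrow> x \<in> Ztau \<Longrightarrow> u + tau powi k * (x - a) \<in> Ztau"
  by (intro Ztau_add Ztau_mult Ztau_diff Ztau_powi)

lemma PLS_vals_S:
  assumes "f \<in> Ftau" "PLS f S"
  shows "a \<in> S \<Longrightarrow> f a \<in> Ztau"
proof (induction "card {s\<in>S. s < a}" arbitrary: a rule: less_induct)
  case (less a)
  note S = PLS_D[OF assms(2)]
  show ?case
  proof (cases "a = 0")
    case True then show ?thesis using Ftau_0[OF assms(1)] by simp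
  next
    case False
    then have a0: "0 < a" using less S by force
    define A where "A = {s\<in>S. s < a}"
    have A: "finite A" "A \<noteq> {}" "0 \<in> A" using S a0 unfolding A_def by auto
    let ?a = "Max A"
    have aA: "?a \<in> A" using A by auto
    have c: "consec S ?a a" unfolding consec_def
    proof (intro conjI ballI)
      show "?a \<in> S" "?a < a" using aA unfolding A_def by auto
      show "a \<in> S" by fact
      fix s assume "s \<in> S"
      show "s \<le> ?a \<or> a \<le> s"
      proof (cases "s < a")
        case True then have "s \<in> A" using \<open>s \<in> S\<close> unfolding A_def by auto
        then show ?thesis using A by auto
      qed auto
    qed
    have "card {s\<in>S. s < ?a} < card {s\<in>S. s < a}"
      by (rule psubset_card_mono) (use S aA in \<open>auto simp: A_def\<close>)
    then have "f ?a \<in> Ztau" using less.hyps aA unfolding A_def by blast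
    obtain k where k: "\<forall>x\<in>{?a..a}. f x = f ?a + tau powi k * (x - ?a)" using S(6)[OF c] by blast
    have "a \<in> {?a..a}" using c unfolding consec_def by simp
    then have fa: "f a = f ?a + tau powi k * (a - ?a)" using k by blast
    have "?a \<in> S" using aA unfolding A_def by simp
    then have "?a \<in> Ztau" "a \<in> Ztau" using S less by auto
    then show ?thesis unfolding fa using Ztau_aff \<open>f ?a \<in> Ztau\<close> by blast
  qed
qed

lemma PLS_vals:
  assumes "f \<in> Ftau" "PLS f S" "x \<in> Ztau" "x \<in> {0..1}"
  shows "f x \<in> Ztau"
proof (cases "x = 1")
  case True then show ?thesis using Ftau_1[OF assms(1)] by simp
next
  case False
  note S = PLS_D[OF assms(2)]
  have "\<exists>a b. consec S a b \<and> a \<le> x \<and> x < b"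
    by (rule cover[OF S(1,4,5,3)]) (use assms False in auto)
  then obtain a b where ab: "consec S a b" "a \<le> x" "x < b" by blast
  obtain k where "\<forall>x\<in>{a..b}. f x = f a + tau powi k * (x - a)" using S(6)[OF ab(1)] by auto
  moreover have "x \<in> {a..b}" using ab by simp
  ultimately have fx: "f x = f a + tau powi k * (x - a)" by blast
  have "a \<in> S" using ab unfolding consec_def by simp
  then have "f a \<in> Ztau" "a \<in> Ztau" using PLS_vals_S[OF assms(1,2)] S by auto
  then show ?thesis unfolding fx using Ztau_aff assms(3) by blast
qed

lemma Ftau_inv_eq: "f \<in> Ftau \<Longrightarrow> f x = y \<Longrightarrow> inv f y = x"
  using Ftau_inj by (metis inv_f_f)

lemma Ftau_inv: assumes "f \<in> Ftau" shows "inv f \<in> Ftau"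
proof -
  obtain S where P: "PLS f S" using Ftau_PLS[OF assms] by auto
  note S = PLS_D[OF P]
  have out: "\<And>x. x \<notin> {0..1} \<Longrightarrow> inv f x = x"
  proof -
    fix x :: real assume "x \<notin> {0..1}"
    then have "f x = x" by (rule Ftau_D(1)[OF assms])
    then show "inv f x = x" by (rule Ftau_inv_eq[OF assms])
  qed
  have pls: "PLS (inv f) (f ` S)" unfolding PLS_def
  proof (intro conjI allI impI)
    show "finite (f ` S)" using S by auto
    show "f ` S \<subseteq> Ztau" unfolding image_subset_iff
    proof
      fix x assume "x \<in> S"
      then have "x \<in> Ztau" "x \<in> {0..1}" using S(2,3) by auto
      then show "f x \<in> Ztau" using PLS_vals[OF assms P] by blast
    qed
    show "f ` S \<subseteq> {0..1}" using Ftau_range[OF assms] S(3) by blast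
    show "0 \<in> f ` S" by (rule image_eqI[of _ _ 0]) (simp_all add: Ftau_0[OF assms] S(4))
    show "1 \<in> f ` S" by (rule image_eqI[of _ _ 1]) (simp_all add: Ftau_1[OF assms] S(5))
    fix a' b' assume c: "consec (f ` S) a' b'"
    have c': "a' \<in> f ` S" "b' \<in> f ` S" "a' < b'" "\<And>s. s \<in> f ` S \<Longrightarrow> s \<le> a' \<or> b' \<le> s"
      using c unfolding consec_def by blast+
    then obtain a b where ab: "a \<in> S" "b \<in> S" "a' = f a" "b' = f b" by blast
    have ab01: "a \<in> {0..1}" "b \<in> {0..1}" using ab S(3) by blast+
    have "a < b" using Ftau_mono_rev[OF assms ab01] c'(3) ab(3,4) by simp
    have cab: "consec S a b" unfolding consec_def
    proof (intro conjI ballI)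
      fix s assume s: "s \<in> S"
      have s01: "s \<in> {0..1}" using s S(3) by blast
      show "s \<le> a \<or> b \<le> s"
      proof (rule ccontr)
        assume "\<not> (s \<le> a \<or> b \<le> s)"
        then have "a < s" "s < b" by auto
        then have "f a < f s" "f s < f b" using Ftau_mono_lt[OF assms] s01 ab01 by blast+
        moreover have "f s \<le> a' \<or> b' \<le> f s" using c'(4)[of "f s"] s by blast
        ultimately show False using ab(3,4) by auto
      qed
    qed (use ab \<open>a < b\<close> in auto)
    obtain k where k: "\<forall>x\<in>{a..b}. f x = f a + tau powi k * (x - a)" using S(6)[OF cab] by auto
    have fb: "f b = f a + tau powi k * (b - a)" using bspec[OF k, of b] \<open>a < b\<close> by simp
    show "\<exists>k::int. \<forall>y\<in>{a'..b'}. inv f y = inv f a' + tau powi k * (y - a')"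
    proof (intro exI[of _ "-k"] ballI)
      fix y assume y: "y \<in> {a'..b'}"
      define x where "x = a + tau powi (-k) * (y - f a)"
      have tk: "tau powi (-k) * tau powi k = 1" using tau_pos by (simp add: power_int_minus field_simps)
      have y1: "f a \<le> y" "y \<le> f b" using y ab by auto
      have "0 \<le> tau powi (-k) * (y - f a)" using y1 by (intro mult_nonneg_nonneg) (simp_all add: less_imp_le[OF tau_powi_pos])
      then have "x \<ge> a" unfolding x_def by simp
      moreover have "x \<le> b"
      proof -
        have l: "tau powi (-k) * (y - f a) \<le> tau powi (-k) * (f b - f a)"
          by (rule mult_left_mono) (use y1 in simp, rule less_imp_le[OF tau_powi_pos])
        have e1: "f b - f a = tau powi k * (b - a)" using fb by simp
        have e2: "tau powi (-k) * (tau powi k * (b - a)) = (tau powi (-k) * tau powi k) * (b - a)"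
          by (simp only: mult.assoc)
        have "tau powi (-k) * (f b - f a) = b - a" unfolding e1 e2 tk by simp
        then have "tau powi (-k) * (y - f a) \<le> b - a" using l by linarith
        then show ?thesis unfolding x_def by linarith
      qed
      ultimately have fx: "f x = f a + tau powi k * (x - a)" using bspec[OF k, of x] by simp
      have xa: "x - a = tau powi (-k) * (y - f a)" unfolding x_def by simp
      have "tau powi k * (tau powi (-k) * (y - f a)) = (tau powi (-k) * tau powi k) * (y - f a)"
        by (simp only: mult.assoc[symmetric] mult.commute[of "tau powi k" "tau powi (-k)"])
      then have "tau powi k * (x - a) = y - f a" unfolding xa tk by simp
      then have "f x = y" using fx by linarith
      then have "inv f y = x" by (rule Ftau_inv_eq[OF assms])
      moreover have "inv f a' = a" unfolding ab(3) by (rule Ftau_inv_eq[OF assms refl])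
      ultimately show "inv f y = inv f a' + tau powi - k * (y - a')" unfolding ab(3) x_def by simp
    qed
  qed
  have i0: "inv f 0 = 0" by (rule Ftau_inv_eq[OF assms Ftau_0[OF assms]])
  have i1: "inv f 1 = 1" by (rule Ftau_inv_eq[OF assms Ftau_1[OF assms]])
  show ?thesis by (rule PLS_Ftau[OF out i0 i1 pls])
qed

lemma Ftau_comp: assumes f: "f \<in> Ftau" and g: "g \<in> Ftau" shows "f \<circ> g \<in> Ftau"
proof -
  obtain Sf where Pf: "PLS f Sf" using Ftau_PLS[OF f] by auto
  obtain Sg where Pg: "PLS g Sg" using Ftau_PLS[OF g] by auto
  have ig: "inv g \<in> Ftau" using Ftau_inv[OF g] .
  obtain Si where Pi: "PLS (inv g) Si" using Ftau_PLS[OF ig] by auto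
  note F = PLS_D[OF Pf] and G = PLS_D[OF Pg]
  have gig: "\<And>y. g (inv g y) = y" using Ftau_surj[OF g] by (simp add: surj_f_inv_f)
  let ?S = "Sg \<union> inv g ` Sf"
  have S01: "?S \<subseteq> {0..1}" using F G Ftau_range[OF ig] by auto
  have pls: "PLS (f \<circ> g) ?S" unfolding PLS_def
  proof (intro conjI allI impI)
    show "finite ?S" using F G by auto
    have "inv g ` Sf \<subseteq> Ztau" unfolding image_subset_iff
    proof
      fix x assume "x \<in> Sf"
      then have "x \<in> Ztau" "x \<in> {0..1}" using F(2,3) by auto
      then show "inv g x \<in> Ztau" using PLS_vals[OF ig Pi] by blast
    qed
    then show "?S \<subseteq> Ztau" using G by auto
    show "?S \<subseteq> {0..1}" by fact
    show "0 \<in> ?S" "1 \<in> ?S" using G by auto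
    fix a b assume c: "consec ?S a b"
    have ab01: "a \<in> {0..1}" "b \<in> {0..1}" "a < b" using c S01 unfolding consec_def by auto
    have "\<exists>p q. consec Sg p q \<and> p \<le> a \<and> a < q"
      by (rule cover[OF G(1,4,5,3)]) (use ab01 in auto)
    then obtain p q where pq: "consec Sg p q" "p \<le> a" "a < q" by blast
    have "q \<in> ?S" using pq unfolding consec_def by simp
    then have "q \<le> a \<or> b \<le> q" using c unfolding consec_def by blast
    then have "b \<le> q" using pq by simp
    obtain j where j: "\<forall>x\<in>{p..q}. g x = g p + tau powi j * (x - p)" using G(6)[OF pq(1)] by auto
    have ga: "g a \<in> {0..1}" "g a < g b" "g b \<le> 1"
      using Ftau_range[OF g] Ftau_mono_lt[OF g] ab01 by auto
    have "\<exists>p q. consec Sf p q \<and> p \<le> g a \<and> g a < q"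
      by (rule cover[OF F(1,4,5,3)]) (use ga in auto)
    then obtain p' q' where pq': "consec Sf p' q'" "p' \<le> g a" "g a < q'" by blast
    have q'01: "q' \<in> {0..1}" using pq' F unfolding consec_def by auto
    have iq: "inv g q' \<in> {0..1}" by (rule Ftau_range[OF ig q'01])
    have "a < inv g q'"
      using Ftau_mono_rev[OF g ab01(1) iq] gig[of q'] pq'(3) by simp
    moreover have "inv g q' \<in> ?S" using pq' unfolding consec_def by auto
    ultimately have "b \<le> inv g q'" using c unfolding consec_def by (meson not_le)
    then have "g b \<le> q'" using Ftau_mono_le[OF g ab01(2) iq] gig[of q'] by simp
    obtain i where i: "\<forall>x\<in>{p'..q'}. f x = f p' + tau powi i * (x - p')" using F(6)[OF pq'(1)] by auto
    show "\<exists>k::int. \<forall>x\<in>{a..b}. (f \<circ> g) x = (f \<circ> g) a + tau powi k * (x - a)"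
    proof (intro exI[of _ "i + j"] ballI)
      fix x assume x: "x \<in> {a..b}"
      have x01: "x \<in> {0..1}" using x ab01 by auto
      have gx: "g a \<le> g x" "g x \<le> g b" using Ftau_mono_le[OF g] x x01 ab01 by auto
      have "x \<in> {p..q}" "a \<in> {p..q}" using x pq \<open>b \<le> q\<close> by auto
      then have "g x = g p + tau powi j * (x - p)" "g a = g p + tau powi j * (a - p)"
        using bspec[OF j] by blast+
      then have e1: "g x - g a = tau powi j * (x - a)" by (simp add: algebra_simps)
      have "g x \<in> {p'..q'}" "g a \<in> {p'..q'}" using gx pq' \<open>g b \<le> q'\<close> ga by auto
      then have "f (g x) = f p' + tau powi i * (g x - p')" "f (g a) = f p' + tau powi i * (g a - p')"
        using bspec[OF i] by blast+
      then have "f (g x) - f (g a) = tau powi i * (g x - g a)" by (simp add: algebra_simps)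
      also have "\<dots> = tau powi (i + j) * (x - a)" using e1 by (simp add: tau_powi_add)
      finally show "(f \<circ> g) x = (f \<circ> g) a + tau powi (i + j) * (x - a)" by simp
    qed
  qed
  have i01: "(f \<circ> g) 0 = 0" "(f \<circ> g) 1 = 1" using Ftau_0[OF f] Ftau_1[OF f] Ftau_0[OF g] Ftau_1[OF g] by auto
  have out: "\<And>x. x \<notin> {0..1} \<Longrightarrow> (f \<circ> g) x = x"
  proof -
    fix x :: real assume x: "x \<notin> {0..1}"
    then have "g x = x" by (rule Ftau_D(1)[OF g])
    then show "(f \<circ> g) x = x" using Ftau_D(1)[OF f x] by simp
  qed
  show ?thesis by (rule PLS_Ftau[OF out i01 pls])
qed

lemma Ftau_id: "id \<in> Ftau"
proof -
  have "PLS id {0,1}" unfolding PLS_def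
  proof (intro conjI allI impI)
    fix a b assume "consec {0,1} a b"
    then have "a = 0" "b = 1" unfolding consec_def by auto
    then show "\<exists>k::int. \<forall>x\<in>{a..b}. id x = id a + tau powi k * (x - a)"
      by (intro exI[of _ 0]) auto
  qed auto
  then show ?thesis using PLS_Ftau[of id] by auto
qed

definition mir :: "(real \<Rightarrow> real) \<Rightarrow> real \<Rightarrow> real" where
  "mir f = (\<lambda>x. 1 - f (1 - x))"

lemma Ftau_mir: assumes f: "f \<in> Ftau" shows "mir f \<in> Ftau"
proof -
  obtain S where P: "PLS f S" using Ftau_PLS[OF f] by auto
  note F = PLS_D[OF P]
  let ?S = "(\<lambda>x. 1 - x) ` S"
  have pls: "PLS (mir f) ?S" unfolding PLS_def
  proof (intro conjI allI impI)
    show "finite ?S" using F by auto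
    show "?S \<subseteq> Ztau" using F by auto
    show "?S \<subseteq> {0..1}" using F by auto
    show "0 \<in> ?S" using F by force
    show "1 \<in> ?S" using F by force
    fix a' b' assume c: "consec ?S a' b'"
    then obtain a b where ab: "a \<in> S" "b \<in> S" "a' = 1 - b" "b' = 1 - a" unfolding consec_def by auto
    have cab: "consec S a b" unfolding consec_def
    proof (intro conjI ballI)
      show "a < b" using c ab unfolding consec_def by auto
      fix s assume s: "s \<in> S"
      then have "1 - s \<in> ?S" by auto
      then have "1 - s \<le> a' \<or> b' \<le> 1 - s" using c unfolding consec_def by blast
      then show "s \<le> a \<or> b \<le> s" using ab(3,4) by auto
    qed (use ab in auto)
    obtain k where k: "\<forall>x\<in>{a..b}. f x = f a + tau powi k * (x - a)" using F(6)[OF cab] by auto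
    have "b \<in> {a..b}" using cab unfolding consec_def by simp
    then have fb: "f b = f a + tau powi k * (b - a)" using bspec[OF k] by blast
    show "\<exists>k::int. \<forall>x\<in>{a'..b'}. mir f x = mir f a' + tau powi k * (x - a')"
    proof (intro exI[of _ k] ballI)
      fix x assume "x \<in> {a'..b'}"
      then have "1 - x \<in> {a..b}" using ab by auto
      then have "f (1 - x) = f a + tau powi k * (1 - x - a)" using bspec[OF k] by blast
      then have e1: "mir f x = 1 - (f a + tau powi k * (1 - x - a))" unfolding mir_def by simp
      have e2: "mir f (1 - b) = 1 - f b" unfolding mir_def by simp
      show "mir f x = mir f a' + tau powi k * (x - a')" unfolding e1 ab(3) e2 fb
        by (simp add: algebra_simps)
    qed
  qed
  have i01: "mir f 0 = 0" "mir f 1 = 1" using Ftau_0[OF f] Ftau_1[OF f] unfolding mir_def by simp_all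
  have out: "\<And>x. x \<notin> {0..1} \<Longrightarrow> mir f x = x"
  proof -
    fix x :: real assume "x \<notin> {0..1}"
    then have "1 - x \<notin> {0..1}" by auto
    then have "f (1 - x) = 1 - x" by (rule Ftau_D(1)[OF f])
    then show "mir f x = x" unfolding mir_def by simp
  qed
  show ?thesis by (rule PLS_Ftau[OF out i01 pls])
qed

lemma mir_comp: "mir (f \<circ> g) = mir f \<circ> mir g"
  unfolding mir_def by auto

lemma mir_funpow: "(mir f) ^^ n = mir (f ^^ n)"
  by (induction n) (auto simp: mir_def mir_comp[symmetric])



definition comm :: "(real \<Rightarrow> real) \<Rightarrow> (real \<Rightarrow> real) \<Rightarrow> real \<Rightarrow> real" where
  "comm f g = f \<circ> g \<circ> inv f \<circ> inv g"

definition supp :: "(real \<Rightarrow> real) \<Rightarrow> real set" where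
  "supp f = {x. f x \<noteq> x}"

lemma bij_inv_r: "bij f \<Longrightarrow> f \<circ> inv f = id"
  using bij_is_surj surj_iff by blast
lemma bij_inv_l: "bij f \<Longrightarrow> inv f \<circ> f = id"
  using bij_is_inj inj_iff by blast
lemma bij_cancel1: "bij f \<Longrightarrow> f \<circ> (inv f \<circ> h) = h"
  by (simp add: comp_assoc[symmetric] bij_inv_r)
lemma bij_cancel2: "bij f \<Longrightarrow> inv f \<circ> (f \<circ> h) = h"
  by (simp add: comp_assoc[symmetric] bij_inv_l)
lemma bij_inv_comp: "bij f \<Longrightarrow> bij g \<Longrightarrow> inv (f \<circ> g) = inv g \<circ> inv f"
  by (rule o_inv_distrib)

lemmas grp_simps = comp_assoc bij_cancel1 bij_cancel2 bij_inv_r bij_inv_l bij_inv_comp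
  bij_comp bij_imp_bij_inv inv_inv_eq id_comp comp_id

lemma comm_bij: "bij f \<Longrightarrow> bij g \<Longrightarrow> bij (comm f g)"
  unfolding comm_def by (simp add: bij_comp bij_imp_bij_inv)

lemma conj_comm:
  assumes "bij t" "bij f" "bij g"
  shows "t \<circ> comm f g \<circ> inv t = comm (t \<circ> f \<circ> inv t) (t \<circ> g \<circ> inv t)"
  unfolding comm_def using assms by (simp add: grp_simps)

lemma comm_prod_left:
  assumes "bij t" "bij b" "bij g"
  shows "comm (t \<circ> b) g = (t \<circ> comm b g \<circ> inv t) \<circ> comm t g"
  unfolding comm_def using assms by (simp add: grp_simps)

lemma comm_inv: assumes "bij t" "bij b" shows "comm t b = inv (comm b t)"
  unfolding comm_def using assms by (simp add: grp_simps)

lemma comm_prod_right_commuting: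
  assumes "bij t" "bij t'" "bij b'" "t \<circ> t' = t' \<circ> t"
  shows "comm t (t' \<circ> b') = t' \<circ> comm t b' \<circ> inv t'"
proof -
  have "inv t \<circ> inv t' = inv t' \<circ> inv t"
    using assms by (metis bij_inv_comp)
  then have e: "inv t \<circ> (inv t' \<circ> h) = inv t' \<circ> (inv t \<circ> h)" for h
    by (metis comp_assoc)
  have e2: "t \<circ> (t' \<circ> h) = t' \<circ> (t \<circ> h)" for h using assms(4) by (metis comp_assoc)
  show ?thesis unfolding comm_def using assms e e2 by (simp add: grp_simps)
qed

lemma supp_inv: "bij f \<Longrightarrow> supp (inv f) = supp f"
  unfolding supp_def by (auto simp: bij_inv_eq_iff) (metis bij_inv_eq_iff)+

lemma supp_conj: assumes "bij c" shows "supp (c \<circ> b \<circ> inv c) = c ` supp b"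
proof
  show "supp (c \<circ> b \<circ> inv c) \<subseteq> c ` supp b"
  proof
    fix x assume "x \<in> supp (c \<circ> b \<circ> inv c)"
    then have "c (b (inv c x)) \<noteq> x" unfolding supp_def by simp
    then have "b (inv c x) \<noteq> inv c x" using assms by (metis bij_inv_eq_iff)
    moreover have "x = c (inv c x)" using assms by (simp add: bij_is_surj surj_f_inv_f)
    ultimately show "x \<in> c ` supp b" unfolding supp_def by blast
  qed
  show "c ` supp b \<subseteq> supp (c \<circ> b \<circ> inv c)"
  proof
    fix x assume "x \<in> c ` supp b"
    then obtain y where y: "x = c y" "b y \<noteq> y" unfolding supp_def by auto
    have "inv c x = y" using y assms by (simp add: bij_is_inj)
    then have "c (b (inv c x)) \<noteq> x" using y assms by (metis bij_is_inj inj_eq)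
    then show "x \<in> supp (c \<circ> b \<circ> inv c)" unfolding supp_def by simp
  qed
qed

lemma supp_comp: "supp (f \<circ> g) \<subseteq> supp f \<union> supp g"
  unfolding supp_def by auto

lemma disj_commute:
  assumes "inj f" "inj g" "supp f \<inter> supp g = {}"
  shows "f \<circ> g = g \<circ> f"
proof
  fix x
  show "(f \<circ> g) x = (g \<circ> f) x"
  proof (cases "f x = x")
    case True
    show ?thesis
    proof (cases "g x = x")
      case True then show ?thesis using \<open>f x = x\<close> by simp
    next
      case False
      then have "g (g x) \<noteq> g x" using assms(2) by (metis injD)
      then have "g x \<in> supp g" unfolding supp_def by simp
      then have "f (g x) = g x" using assms(3) unfolding supp_def by blast
      then show ?thesis using True by simp
    qed
  next
    case False
    then have "x \<in> supp f" unfolding supp_def by simp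
    then have gx: "g x = x" using assms(3) unfolding supp_def by blast
    have "f (f x) \<noteq> f x" using False assms(1) by (metis injD)
    then have "f x \<in> supp f" unfolding supp_def by simp
    then have "g (f x) = f x" using assms(3) unfolding supp_def by blast
    then show ?thesis using gx by simp
  qed
qed

lemma cs_comm': "f \<in> G \<Longrightarrow> g \<in> G \<Longrightarrow> comm f g \<in> commutator_subgroup G"
  unfolding comm_def by (rule cs_comm)

lemma cs_bij:
  assumes "\<And>f. f \<in> G \<Longrightarrow> bij f"
  shows "h \<in> commutator_subgroup G \<Longrightarrow> bij h"
proof (induction rule: commutator_subgroup.induct)
  case cs_id then show ?case by (rule bij_id)
next
  case (cs_comm f g)
  have bf: "bij f" and bg: "bij g" using assms cs_comm by auto
  show ?case by (intro bij_comp bij_imp_bij_inv bf bg)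
next
  case (cs_comp h k) show ?case by (rule bij_comp[OF cs_comp.IH(2) cs_comp.IH(1)])
next
  case (cs_inv h) then show ?case by (simp add: bij_imp_bij_inv)
qed

lemma C_bij: "h \<in> commutator_subgroup Ftau \<Longrightarrow> bij h"
  by (rule cs_bij[OF Ftau_bij])

lemma D_bij: "h \<in> commutator_subgroup (commutator_subgroup Ftau) \<Longrightarrow> bij h"
  by (rule cs_bij[OF C_bij])

lemma D_sub_C: "h \<in> commutator_subgroup (commutator_subgroup Ftau) \<Longrightarrow> h \<in> commutator_subgroup Ftau"
proof (induction rule: commutator_subgroup.induct)
  case cs_id then show ?case by (rule commutator_subgroup.cs_id)
next
  case (cs_comm f g)
  then show ?case by (intro commutator_subgroup.cs_comp commutator_subgroup.cs_inv)
next
  case (cs_comp h k) show ?case by (rule commutator_subgroup.cs_comp[OF cs_comp.IH])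
next
  case (cs_inv h) show ?case by (rule commutator_subgroup.cs_inv[OF cs_inv.IH])
qed

lemma Ftau_conj: "t \<in> Ftau \<Longrightarrow> f \<in> Ftau \<Longrightarrow> t \<circ> f \<circ> inv t \<in> Ftau"
  by (intro Ftau_comp Ftau_inv)

lemma C_conj:
  assumes t: "t \<in> Ftau"
  shows "h \<in> commutator_subgroup Ftau \<Longrightarrow> t \<circ> h \<circ> inv t \<in> commutator_subgroup Ftau"
proof (induction rule: commutator_subgroup.induct)
  have bt: "bij t" by (rule Ftau_bij[OF t])
  case cs_id
  have "t \<circ> id \<circ> inv t = id" using bt by (simp add: bij_inv_r)
  then show ?case by (simp only: commutator_subgroup.cs_id)
next
  have bt: "bij t" by (rule Ftau_bij[OF t])
  case (cs_comm f g)
  have "t \<circ> comm f g \<circ> inv t = comm (t \<circ> f \<circ> inv t) (t \<circ> g \<circ> inv t)"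
    by (rule conj_comm[OF bt Ftau_bij[OF cs_comm(1)] Ftau_bij[OF cs_comm(2)]])
  moreover have "comm (t \<circ> f \<circ> inv t) (t \<circ> g \<circ> inv t) \<in> commutator_subgroup Ftau"
    by (intro cs_comm' Ftau_conj t cs_comm)
  ultimately have "t \<circ> comm f g \<circ> inv t \<in> commutator_subgroup Ftau" by simp
  then show ?case unfolding comm_def .
next
  have bt: "bij t" by (rule Ftau_bij[OF t])
  case (cs_comp h k)
  have e: "t \<circ> (h \<circ> k) \<circ> inv t = (t \<circ> h \<circ> inv t) \<circ> (t \<circ> k \<circ> inv t)"
    using bt by (simp add: grp_simps)
  show ?case unfolding e by (rule commutator_subgroup.cs_comp[OF cs_comp.IH])
next
  have bt: "bij t" by (rule Ftau_bij[OF t])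
  case (cs_inv h)
  have bh: "bij h" by (rule C_bij[OF cs_inv(1)])
  have e: "t \<circ> inv h \<circ> inv t = inv (t \<circ> h \<circ> inv t)"
    using bt bh by (simp add: grp_simps)
  show ?case unfolding e by (rule commutator_subgroup.cs_inv[OF cs_inv.IH])
qed

lemma D_conj:
  assumes t: "t \<in> Ftau"
  shows "h \<in> commutator_subgroup (commutator_subgroup Ftau) \<Longrightarrow> t \<circ> h \<circ> inv t \<in> commutator_subgroup (commutator_subgroup Ftau)"
proof (induction rule: commutator_subgroup.induct)
  have bt: "bij t" by (rule Ftau_bij[OF t])
  case cs_id
  have "t \<circ> id \<circ> inv t = id" using bt by (simp add: bij_inv_r)
  then show ?case by (simp only: commutator_subgroup.cs_id)
next
  have bt: "bij t" by (rule Ftau_bij[OF t])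
  case (cs_comm f g)
  have "t \<circ> comm f g \<circ> inv t = comm (t \<circ> f \<circ> inv t) (t \<circ> g \<circ> inv t)"
    by (rule conj_comm[OF bt C_bij[OF cs_comm(1)] C_bij[OF cs_comm(2)]])
  moreover have "comm (t \<circ> f \<circ> inv t) (t \<circ> g \<circ> inv t) \<in> commutator_subgroup (commutator_subgroup Ftau)"
    by (intro cs_comm' C_conj t cs_comm)
  ultimately have "t \<circ> comm f g \<circ> inv t \<in> commutator_subgroup (commutator_subgroup Ftau)" by simp
  then show ?case unfolding comm_def .
next
  have bt: "bij t" by (rule Ftau_bij[OF t])
  case (cs_comp h k)
  have e: "t \<circ> (h \<circ> k) \<circ> inv t = (t \<circ> h \<circ> inv t) \<circ> (t \<circ> k \<circ> inv t)"
    using bt by (simp add: grp_simps)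
  show ?case unfolding e by (rule commutator_subgroup.cs_comp[OF cs_comp.IH])
next
  have bt: "bij t" by (rule Ftau_bij[OF t])
  case (cs_inv h)
  have bh: "bij h" by (rule D_bij[OF cs_inv(1)])
  have e: "t \<circ> inv h \<circ> inv t = inv (t \<circ> h \<circ> inv t)"
    using bt bh by (simp add: grp_simps)
  show ?case unfolding e by (rule commutator_subgroup.cs_inv[OF cs_inv.IH])
qed



definition germ0 :: "(real \<Rightarrow> real) \<Rightarrow> int \<Rightarrow> bool" where
  "germ0 f k \<longleftrightarrow> (\<exists>e>0. \<forall>x\<in>{0..e}. f x = tau powi k * x)"
definition germ1 :: "(real \<Rightarrow> real) \<Rightarrow> int \<Rightarrow> bool" where
  "germ1 f k \<longleftrightarrow> (\<exists>e>0. \<forall>x\<in>{1-e..1}. f x = 1 - tau powi k * (1 - x))"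

lemma tpm: "0 \<le> x \<Longrightarrow> 0 \<le> tau powi k * x"
  by (simp add: less_imp_le)

lemma Ftau_germ0: assumes f: "f \<in> Ftau" shows "\<exists>k. germ0 f k"
proof -
  obtain S where P: "PLS f S" using Ftau_PLS[OF f] by auto
  note S = PLS_D[OF P]
  have "\<exists>a b. consec S a b \<and> a \<le> 0 \<and> 0 < b"
    by (rule cover[OF S(1,4,5,3)]) simp_all
  then obtain a b where ab: "consec S a b" "a \<le> 0" "0 < b" by blast
  have "a \<in> {0..1}" using ab S(3) unfolding consec_def by blast
  then have a0: "a = 0" using ab by simp
  obtain k where k: "\<forall>x\<in>{a..b}. f x = f a + tau powi k * (x - a)" using S(6)[OF ab(1)] by blast
  have "\<forall>x\<in>{0..b}. f x = tau powi k * x"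
  proof
    fix x assume "x \<in> {0..b}"
    then have "f x = f a + tau powi k * (x - a)" using bspec[OF k, of x] a0 by simp
    then show "f x = tau powi k * x" using a0 Ftau_0[OF f] by simp
  qed
  then show ?thesis unfolding germ0_def using ab(3) by blast
qed

lemma Ftau_germ1: assumes f: "f \<in> Ftau" shows "\<exists>k. germ1 f k"
proof -
  obtain S where P: "PLS f S" using Ftau_PLS[OF f] by auto
  note S = PLS_D[OF P]
  obtain a where ab: "consec S a 1" using cover1[OF S(1,4,5,3)] by blast
  obtain k where k: "\<forall>x\<in>{a..1}. f x = f a + tau powi k * (x - a)" using S(6)[OF ab(1)] by blast
  have a1: "a < 1" using ab unfolding consec_def by simp
  have "f 1 = f a + tau powi k * (1 - a)" using bspec[OF k, of 1] a1 by simp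
  then have fa: "f a = 1 - tau powi k * (1 - a)" using Ftau_1[OF f] by simp
  have "\<forall>x\<in>{1 - (1 - a)..1}. f x = 1 - tau powi k * (1 - x)"
  proof
    fix x assume "x \<in> {1 - (1 - a)..1}"
    then have "f x = f a + tau powi k * (x - a)" using bspec[OF k, of x] by simp
    then show "f x = 1 - tau powi k * (1 - x)" unfolding fa by (simp add: algebra_simps)
  qed
  then show ?thesis unfolding germ1_def using a1 by (intro exI[of _ k] exI[of _ "1 - a"]) simp
qed

lemma germ0_comp: assumes "germ0 f k" "germ0 g j" shows "germ0 (f \<circ> g) (k + j)"
proof -
  obtain e1 where e1: "e1 > 0" "\<forall>x\<in>{0..e1}. f x = tau powi k * x" using assms(1) unfolding germ0_def by blast
  obtain e2 where e2: "e2 > 0" "\<forall>x\<in>{0..e2}. g x = tau powi j * x" using assms(2) unfolding germ0_def by blast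
  define e where "e = min e2 (e1 / tau powi j)"
  have "e > 0" unfolding e_def using e1 e2 by simp
  moreover have "\<forall>x\<in>{0..e}. (f \<circ> g) x = tau powi (k + j) * x"
  proof
    fix x assume x: "x \<in> {0..e}"
    then have "x \<le> e2" "x \<le> e1 / tau powi j" unfolding e_def by auto
    then have gx: "g x = tau powi j * x" using bspec[OF e2(2), of x] x by simp
    have "tau powi j * x \<le> tau powi j * (e1 / tau powi j)"
      using \<open>x \<le> e1 / tau powi j\<close> by (rule mult_left_mono) (simp add: less_imp_le)
    then have "tau powi j * x \<le> e1" using tau_pos by simp
    moreover have "0 \<le> tau powi j * x" by (rule tpm) (use x in simp)
    ultimately have "f (tau powi j * x) = tau powi k * (tau powi j * x)" using bspec[OF e1(2), of "tau powi j * x"] by simp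
    then show "(f \<circ> g) x = tau powi (k + j) * x" using gx by (simp add: tau_powi_add)
  qed
  ultimately show ?thesis unfolding germ0_def by blast
qed

lemma germ0_inv: assumes "germ0 f k" "bij f" shows "germ0 (inv f) (-k)"
proof -
  obtain e1 where e1: "e1 > 0" "\<forall>x\<in>{0..e1}. f x = tau powi k * x" using assms(1) unfolding germ0_def by blast
  define e where "e = tau powi k * e1"
  have "e > 0" unfolding e_def using e1 by simp
  moreover have "\<forall>y\<in>{0..e}. inv f y = tau powi (-k) * y"
  proof
    fix y assume y: "y \<in> {0..e}"
    define x where "x = tau powi (-k) * y"
    have tk: "tau powi (-k) * tau powi k = 1" using tau_pos by (simp add: power_int_minus field_simps)
    have "x \<le> tau powi (-k) * e" unfolding x_def using y by (intro mult_left_mono) (simp_all add: less_imp_le)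
    moreover have "tau powi (-k) * e = e1" unfolding e_def by (simp only: mult.assoc[symmetric] tk)
    ultimately have "x \<le> e1" by simp
    moreover have "0 \<le> tau powi (-k) * y" by (rule tpm) (use y in simp)
    ultimately have "x \<in> {0..e1}" unfolding x_def by simp
    then have "f x = tau powi k * x" using bspec[OF e1(2)] by blast
    also have "tau powi k * x = (tau powi (-k) * tau powi k) * y"
      unfolding x_def by (simp only: mult.assoc[symmetric] mult.commute[of "tau powi k" "tau powi (-k)"])
    also have "\<dots> = y" unfolding tk by simp
    finally have "f x = y" .
    then have "inv f y = x" using assms(2) by (metis bij_is_inj inv_f_f)
    then show "inv f y = tau powi (-k) * y" unfolding x_def .
  qed
  ultimately show ?thesis unfolding germ0_def by blast
qed

lemma germ1_comp: assumes "germ1 f k" "germ1 g j" shows "germ1 (f \<circ> g) (k + j)"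
proof -
  obtain e1 where e1: "e1 > 0" "\<forall>x\<in>{1-e1..1}. f x = 1 - tau powi k * (1 - x)" using assms(1) unfolding germ1_def by blast
  obtain e2 where e2: "e2 > 0" "\<forall>x\<in>{1-e2..1}. g x = 1 - tau powi j * (1 - x)" using assms(2) unfolding germ1_def by blast
  define e where "e = min e2 (e1 / tau powi j)"
  have "e > 0" unfolding e_def using e1 e2 by simp
  moreover have "\<forall>x\<in>{1-e..1}. (f \<circ> g) x = 1 - tau powi (k + j) * (1 - x)"
  proof
    fix x assume x: "x \<in> {1-e..1}"
    then have "1 - x \<le> e2" "1 - x \<le> e1 / tau powi j" unfolding e_def by auto
    then have gx: "g x = 1 - tau powi j * (1 - x)" using bspec[OF e2(2), of x] x by simp
    have "tau powi j * (1 - x) \<le> tau powi j * (e1 / tau powi j)"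
      using \<open>1 - x \<le> e1 / tau powi j\<close> by (rule mult_left_mono) (simp add: less_imp_le)
    then have "tau powi j * (1 - x) \<le> e1" using tau_pos by simp
    moreover have "0 \<le> tau powi j * (1 - x)" by (rule tpm) (use x in simp)
    ultimately have "f (g x) = 1 - tau powi k * (1 - g x)" using bspec[OF e1(2), of "g x"] gx by simp
    then show "(f \<circ> g) x = 1 - tau powi (k + j) * (1 - x)" using gx by (simp add: tau_powi_add)
  qed
  ultimately show ?thesis unfolding germ1_def by blast
qed

lemma germ1_inv: assumes "germ1 f k" "bij f" shows "germ1 (inv f) (-k)"
proof -
  obtain e1 where e1: "e1 > 0" "\<forall>x\<in>{1-e1..1}. f x = 1 - tau powi k * (1 - x)" using assms(1) unfolding germ1_def by blast
  define e where "e = tau powi k * e1"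
  have "e > 0" unfolding e_def using e1 by simp
  moreover have "\<forall>y\<in>{1-e..1}. inv f y = 1 - tau powi (-k) * (1 - y)"
  proof
    fix y assume y: "y \<in> {1-e..1}"
    define x where "x = 1 - tau powi (-k) * (1 - y)"
    have tk: "tau powi (-k) * tau powi k = 1" using tau_pos by (simp add: power_int_minus field_simps)
    have "tau powi (-k) * (1 - y) \<le> tau powi (-k) * e" using y by (intro mult_left_mono) (simp_all add: less_imp_le)
    moreover have "tau powi (-k) * e = e1" unfolding e_def by (simp only: mult.assoc[symmetric] tk)
    ultimately have "tau powi (-k) * (1 - y) \<le> e1" by simp
    moreover have "0 \<le> tau powi (-k) * (1 - y)" by (rule tpm) (use y in simp)
    ultimately have "x \<in> {1-e1..1}" unfolding x_def by simp
    then have "f x = 1 - tau powi k * (1 - x)" using bspec[OF e1(2)] by blast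
    also have "tau powi k * (1 - x) = (tau powi (-k) * tau powi k) * (1 - y)"
      unfolding x_def by (simp add: mult.assoc[symmetric] mult.commute[of "tau powi k" "tau powi (-k)"])
    also have "\<dots> = 1 - y" unfolding tk by simp
    finally have "f x = y" by simp
    then have "inv f y = x" using assms(2) by (metis bij_is_inj inv_f_f)
    then show "inv f y = 1 - tau powi (-k) * (1 - y)" unfolding x_def .
  qed
  ultimately show ?thesis unfolding germ1_def by blast
qed

lemma germ0_id: "germ0 id 0" unfolding germ0_def by (intro exI[of _ 1]) simp
lemma germ1_id: "germ1 id 0" unfolding germ1_def by (intro exI[of _ 1]) simp

lemma germ0_fix: assumes "e > 0" "\<And>x. x \<in> {0..e} \<Longrightarrow> f x = x" shows "germ0 f 0"
  unfolding germ0_def using assms by (intro exI[of _ e]) simp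
lemma germ1_fix: assumes "e > 0" "\<And>x. x \<in> {1-e..1} \<Longrightarrow> f x = x" shows "germ1 f 0"
  unfolding germ1_def using assms by (intro exI[of _ e]) simp

lemma germs_cs:
  assumes "f \<in> Ftau" "germ0 f 0" "germ1 f 0"
  shows "\<exists>e>0. \<forall>x. x < e \<or> 1 - e < x \<longrightarrow> f x = x"
proof -
  obtain e1 where e1: "e1 > 0" "\<forall>x\<in>{0..e1}. f x = tau powi 0 * x" using assms(2) unfolding germ0_def by blast
  obtain e2 where e2: "e2 > 0" "\<forall>x\<in>{1-e2..1}. f x = 1 - tau powi 0 * (1 - x)" using assms(3) unfolding germ1_def by blast
  define e where "e = min e1 e2"
  have "\<forall>x. x < e \<or> 1 - e < x \<longrightarrow> f x = x"
  proof (intro allI impI)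
    fix x assume x: "x < e \<or> 1 - e < x"
    show "f x = x"
    proof (cases "x \<in> {0..1}")
      case False then show ?thesis by (rule Ftau_D(1)[OF assms(1)])
    next
      case True
      show ?thesis
      proof (cases "x < e")
        case True
        then have "x \<in> {0..e1}" using \<open>x \<in> {0..1}\<close> unfolding e_def by auto
        then show ?thesis using bspec[OF e1(2)] by simp
      next
        case False
        then have "x \<in> {1-e2..1}" using x \<open>x \<in> {0..1}\<close> unfolding e_def by auto
        then show ?thesis using bspec[OF e2(2)] by simp
      qed
    qed
  qed
  moreover have "e > 0" unfolding e_def using e1 e2 by simp
  ultimately show ?thesis by blast
qed



definition Ef :: "real \<Rightarrow> real \<Rightarrow> real" where
  "Ef r x = (if x < 0 \<or> r < x then x else if x \<le> tau * r then tau * x else tau * tau * r + (x - tau * r) / tau)"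

lemma tau_facts: "0 < tau" "tau < 1" "tau * tau = 1 - tau" using tau_pos tau_lt1 tau_sq by auto

lemma tr_lt: "0 < r \<Longrightarrow> tau * r < r"
proof -
  assume r: "0 < r"
  have "0 < (1 - tau) * r" using r tau_facts by simp
  then show ?thesis by (simp add: algebra_simps)
qed
lemma tr_pos: "0 < r \<Longrightarrow> 0 < tau * r" using tau_facts by simp

lemma Ef_lin: assumes "0 \<le> x" "x \<le> tau * r" "0 < r" shows "Ef r x = tau * x"
proof -
  have "tau * r < r" by (rule tr_lt[OF assms(3)])
  then have "\<not> (x < 0 \<or> r < x)" using assms by linarith
  then show ?thesis unfolding Ef_def using assms(2) by simp
qed

lemma Ef_mid: assumes "tau * r \<le> x" "x \<le> r" "0 < r" shows "Ef r x = tau * tau * r + (x - tau * r) / tau"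
proof (cases "x \<le> tau * r")
  case True
  then have x: "x = tau * r" using assms by simp
  have "Ef r x = tau * x" using x tr_pos[OF assms(3)] by (intro Ef_lin) (auto simp: assms)
  then show ?thesis using x by simp
next
  case False
  have "0 \<le> x" using assms tau_facts by (smt (verit) mult_pos_pos)
  then show ?thesis unfolding Ef_def using False assms by auto
qed

lemma Ef_out: "x \<le> 0 \<or> r \<le> x \<Longrightarrow> 0 < r \<Longrightarrow> Ef r x = x"
proof -
  assume a: "x \<le> 0 \<or> r \<le> x" "0 < r"
  show "Ef r x = x"
  proof (cases "x < 0 \<or> r < x")
    case True then show ?thesis unfolding Ef_def by simp
  next
    case False
    then have "x = 0 \<or> x = r" using a by auto
    then show ?thesis
    proof
      assume "x = 0" then show ?thesis using Ef_lin[of x r] tr_pos[of r] a by simp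
    next
      assume x: "x = r"
      have "tau * r < r" using a tr_lt by simp
      then have "Ef r x = tau * tau * r + (r - tau * r) / tau" unfolding Ef_def x using a by auto
      also have "\<dots> = r * (tau * tau + (1 - tau) / tau)" by (simp add: algebra_simps diff_divide_distrib)
      also have "(1 - tau) / tau = tau" using tau_facts by (simp add: field_simps)
      also have "tau * tau + tau = 1" using tau_facts by simp
      finally show ?thesis using x by simp
    qed
  qed
qed

lemma tau_pow_pos: "0 < tau ^ N" using tau_pos by simp
lemma tau_pow_le1: "tau ^ N \<le> 1" using tau_pos tau_lt1 by (simp add: power_le_one)

lemma Ef_Ftau: "Ef (tau ^ N) \<in> Ftau"
proof -
  define r where "r = tau ^ N"
  have r: "0 < r" "r \<le> 1" "r \<in> Ztau" unfolding r_def using tau_pow_pos tau_pow_le1 by (auto intro: Ztau_power)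
  have tr: "0 < tau * r" "tau * r < r" using r tau_facts by auto
  define S where "S = {0, tau * r, r, 1}"
  have "PLS (Ef r) S" unfolding PLS_def
  proof (intro conjI allI impI)
    show "finite S" unfolding S_def by simp
    show "S \<subseteq> Ztau" unfolding S_def using r by (auto intro: Ztau_mult)
    show "S \<subseteq> {0..1}" unfolding S_def using r tr by auto
    show "0 \<in> S" "1 \<in> S" unfolding S_def by auto
    fix a b assume c: "consec S a b"
    have ab: "a \<in> S" "b \<in> S" "a < b" using c unfolding consec_def by auto
    have a0: "0 \<le> a" "b \<le> 1" using ab r tr unfolding S_def by auto
    have c1: "b \<le> tau * r \<or> tau * r \<le> a" using c unfolding consec_def S_def by auto
    have c2: "b \<le> r \<or> r \<le> a" using c unfolding consec_def S_def by auto
    show "\<exists>k::int. \<forall>x\<in>{a..b}. Ef r x = Ef r a + tau powi k * (x - a)"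
    proof (cases "b \<le> tau * r")
      case True
      show ?thesis
      proof (intro exI[of _ 1] ballI)
        fix x assume x: "x \<in> {a..b}"
        have "Ef r x = tau * x" using x a0 True r by (intro Ef_lin) auto
        moreover have "Ef r a = tau * a" using a0 ab True r by (intro Ef_lin) auto
        ultimately show "Ef r x = Ef r a + tau powi 1 * (x - a)" by (simp add: algebra_simps)
      qed
    next
      case False
      then have ta: "tau * r \<le> a" using c1 by simp
      show ?thesis
      proof (cases "b \<le> r")
        case True
        show ?thesis
        proof (intro exI[of _ "-1"] ballI)
          fix x assume x: "x \<in> {a..b}"
          have "Ef r x = tau * tau * r + (x - tau * r) / tau" using x ta True r by (intro Ef_mid) auto
          moreover have "Ef r a = tau * tau * r + (a - tau * r) / tau" using ab ta True r by (intro Ef_mid) auto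
          ultimately show "Ef r x = Ef r a + tau powi (-1) * (x - a)"
            by (simp add: power_int_minus divide_inverse algebra_simps)
        qed
      next
        case False
        then have "r \<le> a" using c2 by simp
        show ?thesis
        proof (intro exI[of _ 0] ballI)
          fix x assume x: "x \<in> {a..b}"
          have "Ef r x = x" using x \<open>r \<le> a\<close> r by (intro Ef_out) auto
          moreover have "Ef r a = a" using \<open>r \<le> a\<close> r by (intro Ef_out) auto
          ultimately show "Ef r x = Ef r a + tau powi 0 * (x - a)" by simp
        qed
      qed
    qed
  qed
  moreover have "Ef r 0 = 0" using r by (intro Ef_out) auto
  moreover have "Ef r 1 = 1" using r by (intro Ef_out) auto
  moreover have "\<And>x. x \<notin> {0..1} \<Longrightarrow> Ef r x = x" using r by (intro Ef_out) auto
  ultimately show ?thesis unfolding r_def[symmetric] by (meson PLS_Ftau)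
qed

lemma z_ident: "x - (tau * tau * 1 + (x - tau * 1) / tau) = tau * (1 - x)"
proof -
  have "(x - tau) / tau = (x - tau) * (1 + tau)" using tau_inv by (simp add: divide_inverse)
  then show ?thesis by (simp add: algebra_simps)
qed

lemma z_range: "x \<in> {0..1} \<Longrightarrow> 0 \<le> Ef 1 x \<and> Ef 1 x \<le> x"
proof -
  assume x: "x \<in> {0..1}"
  show ?thesis
  proof (cases "x \<le> tau")
    case True
    then have "Ef 1 x = tau * x" using x by (intro Ef_lin) auto
    then show ?thesis using x tau_facts by (simp add: mult_le_cancel_right1 mult_left_le_one_le)
  next
    case False
    then have "Ef 1 x = tau * tau * 1 + (x - tau * 1) / tau" using x by (intro Ef_mid) auto
    moreover have "x - (tau * tau * 1 + (x - tau * 1) / tau) = tau * (1 - x)" by (rule z_ident)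
    moreover have "0 \<le> tau * tau * 1 + (x - tau * 1) / tau" using False tau_facts by simp
    moreover have "0 \<le> tau * (1 - x)" using x tau_facts by simp
    ultimately show ?thesis by linarith
  qed
qed

lemma z_step: assumes "x \<in> {e..1-e}" "0 < e" shows "Ef 1 x \<le> x - tau * tau * e"
proof (cases "x \<le> tau")
  case True
  have x0: "0 \<le> x" using assms by simp
  then have "Ef 1 x = tau * x" using True by (intro Ef_lin) auto
  moreover have "x - tau * x = tau * tau * x" unfolding tau_sq by (simp add: algebra_simps)
  moreover have "tau * tau * e \<le> tau * tau * x" using assms tau_facts by simp
  ultimately show ?thesis by simp
next
  case False
  then have "Ef 1 x = tau * tau * 1 + (x - tau * 1) / tau" using assms by (intro Ef_mid) auto
  moreover have "x - (tau * tau * 1 + (x - tau * 1) / tau) = tau * (1 - x)" by (rule z_ident)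
  moreover have "tau * tau * e \<le> tau * e"
  proof -
    have "0 \<le> tau * e * (1 - tau)" using tau_facts assms by simp
    moreover have "tau * e - tau * tau * e = tau * e * (1 - tau)" by (simp add: algebra_simps)
    ultimately show ?thesis by linarith
  qed
  moreover have "tau * e \<le> tau * (1 - x)" using tau_facts assms by simp
  ultimately show ?thesis by simp
qed

lemma z_push: assumes "0 < e" shows "\<exists>n. (Ef 1 ^^ n) (1 - e) < e"
proof (rule ccontr)
  assume "\<not> ?thesis"
  then have ge: "\<And>n. e \<le> (Ef 1 ^^ n) (1 - e)" by (simp add: not_less)
  define d where "d = tau * tau * e"
  have d: "d > 0" unfolding d_def using tau_facts assms by simp
  have e1: "e \<le> 1 - e" using ge[of 0] by simp
  have "\<And>n. (Ef 1 ^^ n) (1 - e) \<le> 1 - e - n * d"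
  proof -
    fix n show "(Ef 1 ^^ n) (1 - e) \<le> 1 - e - n * d"
    proof (induction n)
      case 0 then show ?case by simp
    next
      case (Suc n)
      let ?y = "(Ef 1 ^^ n) (1 - e)"
      have "?y \<in> {e..1-e}" using ge[of n] Suc d by (smt (verit) atLeastAtMost_iff of_nat_0_le_iff mult_nonneg_nonneg)
      then have "Ef 1 ?y \<le> ?y - d" unfolding d_def using z_step assms by blast
      then show ?case using Suc by (simp add: algebra_simps)
    qed
  qed
  moreover obtain n :: nat where "1 / d < n" using reals_Archimedean2 by blast
  then have "1 < n * d" using d by (simp add: field_simps)
  ultimately have "(Ef 1 ^^ n) (1 - e) < 0" by (smt (verit) assms)
  then show False using ge[of n] assms by simp
qed



definition pw :: "(real \<Rightarrow> real) \<Rightarrow> int \<Rightarrow> real \<Rightarrow> real" where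
  "pw f k = (if 0 \<le> k then f ^^ nat k else inv f ^^ nat (-k))"

lemma funpow_Ftau: "f \<in> Ftau \<Longrightarrow> f ^^ n \<in> Ftau"
proof (induction n)
  case 0 show ?case unfolding funpow.simps(1) by (rule Ftau_id)
next
  case (Suc n) show ?case unfolding funpow.simps(2) by (rule Ftau_comp[OF Suc.prems Suc.IH[OF Suc.prems]])
qed

lemma pw_Ftau: "f \<in> Ftau \<Longrightarrow> pw f k \<in> Ftau"
  unfolding pw_def using funpow_Ftau Ftau_inv by simp

lemma pw_bij: assumes "bij f" shows "bij (pw f k)"
  unfolding pw_def using bij_fn[OF assms] bij_fn[OF bij_imp_bij_inv[OF assms]] by simp

lemma funpow_fix: "f x = x \<Longrightarrow> (f ^^ n) x = x"
  by (induction n) auto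

lemma pw_fix: assumes "bij f" "f x = x" shows "pw f k x = x"
proof -
  have "inv f x = x" using assms by (metis bij_is_inj inv_f_f)
  then show ?thesis unfolding pw_def using assms(2) funpow_fix[of f x] funpow_fix[of "inv f" x] by simp
qed

lemma germ0_funpow: "germ0 f j \<Longrightarrow> germ0 (f ^^ n) (int n * j)"
proof (induction n)
  case 0 show ?case unfolding funpow.simps(1) using germ0_id by (simp del: id_apply)
next
  case (Suc n)
  have eq: "int (Suc n) * j = j + int n * j" by (simp add: algebra_simps)
  show ?case unfolding funpow.simps(2) eq by (rule germ0_comp[OF Suc.prems Suc.IH[OF Suc.prems]])
qed

lemma germ1_funpow: "germ1 f j \<Longrightarrow> germ1 (f ^^ n) (int n * j)"
proof (induction n)
  case 0 show ?case unfolding funpow.simps(1) using germ1_id by (simp del: id_apply)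
next
  case (Suc n)
  have eq: "int (Suc n) * j = j + int n * j" by (simp add: algebra_simps)
  show ?case unfolding funpow.simps(2) eq by (rule germ1_comp[OF Suc.prems Suc.IH[OF Suc.prems]])
qed

lemma germ0_pw: assumes "germ0 f j" "bij f" shows "germ0 (pw f k) (k * j)"
proof (cases "0 \<le> k")
  case True
  then show ?thesis unfolding pw_def using germ0_funpow[OF assms(1), of "nat k"] by simp
next
  case False
  have "germ0 (inv f ^^ nat (-k)) (int (nat (-k)) * (-j))" by (rule germ0_funpow[OF germ0_inv[OF assms]])
  then show ?thesis unfolding pw_def using False by simp
qed

lemma germ1_pw: assumes "germ1 f j" "bij f" shows "germ1 (pw f k) (k * j)"
proof (cases "0 \<le> k")
  case True
  then show ?thesis unfolding pw_def using germ1_funpow[OF assms(1), of "nat k"] by simp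
next
  case False
  have "germ1 (inv f ^^ nat (-k)) (int (nat (-k)) * (-j))" by (rule germ1_funpow[OF germ1_inv[OF assms]])
  then show ?thesis unfolding pw_def using False by simp
qed

lemma commute_inv:
  assumes "f \<circ> g = g \<circ> f" "bij f" "bij g"
  shows "inv f \<circ> g = g \<circ> inv f"
proof
  fix y
  obtain z where z: "y = f z" using assms(2) by (metis bij_pointE)
  have "g (f z) = f (g z)" using assms(1) by (metis comp_apply)
  then have "inv f (g y) = g z" unfolding z using assms(2) by (metis bij_is_inj inv_f_f)
  moreover have "inv f y = z" unfolding z using assms(2) by (metis bij_is_inj inv_f_f)
  ultimately show "(inv f \<circ> g) y = (g \<circ> inv f) y" by simp
qed

lemma commute_funpow:
  assumes "f \<circ> g = g \<circ> f"
  shows "(f ^^ n) \<circ> g = g \<circ> (f ^^ n)"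
proof (induction n)
  case 0 then show ?case by simp
next
  case (Suc n)
  have "(f ^^ Suc n) \<circ> g = f \<circ> ((f ^^ n) \<circ> g)" by (simp add: comp_assoc)
  also have "\<dots> = (f \<circ> g) \<circ> (f ^^ n)" unfolding Suc by (simp add: comp_assoc)
  also have "\<dots> = g \<circ> (f ^^ Suc n)" unfolding assms by (simp add: comp_assoc)
  finally show ?case .
qed

lemma commute_pw1:
  assumes "f \<circ> g = g \<circ> f" "bij f" "bij g"
  shows "pw f k \<circ> g = g \<circ> pw f k"
  unfolding pw_def using commute_funpow[OF assms(1)] commute_funpow[OF commute_inv[OF assms]] by simp

lemma commute_pw:
  assumes "f \<circ> g = g \<circ> f" "bij f" "bij g"
  shows "pw f k \<circ> pw g l = pw g l \<circ> pw f k"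
proof -
  have "pw f k \<circ> g = g \<circ> pw f k" by (rule commute_pw1[OF assms])
  then have "g \<circ> pw f k = pw f k \<circ> g" by simp
  then have "pw g l \<circ> pw f k = pw f k \<circ> pw g l" by (rule commute_pw1[OF _ assms(3) pw_bij[OF assms(2)]])
  then show ?thesis by simp
qed

definition Mf :: "real \<Rightarrow> real \<Rightarrow> real" where
  "Mf r = mir (Ef r)"

definition TT :: "nat \<Rightarrow> int \<Rightarrow> int \<Rightarrow> real \<Rightarrow> real" where
  "TT N k m = pw (Ef (tau ^ N)) k \<circ> pw (Mf (tau ^ N)) m"

lemma Mf_Ftau: "Mf (tau ^ N) \<in> Ftau"
  unfolding Mf_def by (rule Ftau_mir[OF Ef_Ftau])

lemma Mf_out: "0 < r \<Longrightarrow> x \<le> 1 - r \<or> 1 \<le> x \<Longrightarrow> Mf r x = x"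
  unfolding Mf_def mir_def using Ef_out[of "1 - x" r] by auto

lemma Mf_lin: "0 < r \<Longrightarrow> 1 - tau * r \<le> x \<Longrightarrow> x \<le> 1 \<Longrightarrow> Mf r x = 1 - tau * (1 - x)"
  unfolding Mf_def mir_def using Ef_lin[of "1 - x" r] by auto

lemma TT_Ftau: "TT N k m \<in> Ftau"
  unfolding TT_def by (intro Ftau_comp pw_Ftau Ef_Ftau Mf_Ftau)

lemma TT_bij: "bij (TT N k m)"
  using TT_Ftau Ftau_bij by blast

lemma tau_half: "1/2 \<le> tau"
proof -
  have "2 \<le> sqrt 5" by (rule real_le_rsqrt) simp
  then show ?thesis unfolding tau_def by simp
qed

lemma tauN_small: assumes "2 \<le> N" shows "tau ^ N \<le> 1 - tau ^ N" "tau ^ N < 1"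
proof -
  have "tau ^ N \<le> tau ^ 2" using assms tau_facts by (simp add: power_decreasing)
  also have "tau ^ 2 = 1 - tau" using tau_sq2 .
  finally have a: "tau ^ N \<le> 1 - tau" .
  then show "tau ^ N \<le> 1 - tau ^ N" using tau_half by simp
  show "tau ^ N < 1" using a tau_facts by simp
qed

lemma Ef_bij: "bij (Ef (tau ^ N))" using Ef_Ftau Ftau_bij by blast
lemma Mf_bij: "bij (Mf (tau ^ N))" using Mf_Ftau Ftau_bij by blast

lemma TT_fix: assumes "2 \<le> N" "tau ^ N \<le> x" "x \<le> 1 - tau ^ N" shows "TT N k m x = x"
proof -
  have r: "0 < tau ^ N" by (rule tau_pow_pos)
  have "Mf (tau ^ N) x = x" using r assms by (intro Mf_out) auto
  then have "pw (Mf (tau ^ N)) m x = x" by (rule pw_fix[OF Mf_bij])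
  moreover have "Ef (tau ^ N) x = x" using r assms by (intro Ef_out) auto
  then have "pw (Ef (tau ^ N)) k x = x" by (rule pw_fix[OF Ef_bij])
  ultimately show ?thesis unfolding TT_def by simp
qed

lemma TT_germ0: assumes "2 \<le> N" shows "germ0 (TT N k m) k"
proof -
  define r where "r = tau ^ N"
  have r: "0 < r" "r < 1" unfolding r_def using tau_pow_pos tauN_small[OF assms] by auto
  have "germ0 (Ef r) 1"
    unfolding germ0_def using r tr_pos[OF r(1)] by (intro exI[of _ "tau * r"]) (auto intro: Ef_lin)
  then have g1: "germ0 (pw (Ef r) k) (k * 1)" by (rule germ0_pw[OF _ Ef_bij[of N, folded r_def]])
  have "germ0 (Mf r) 0" using r by (intro germ0_fix[of "1 - r"]) (auto intro: Mf_out)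
  then have g2: "germ0 (pw (Mf r) m) (m * 0)" by (rule germ0_pw[OF _ Mf_bij[of N, folded r_def]])
  have "germ0 (pw (Ef r) k \<circ> pw (Mf r) m) (k * 1 + m * 0)" by (rule germ0_comp[OF g1 g2])
  then show ?thesis unfolding TT_def r_def[symmetric] by simp
qed

lemma TT_germ1: assumes "2 \<le> N" shows "germ1 (TT N k m) m"
proof -
  define r where "r = tau ^ N"
  have r: "0 < r" "r < 1" unfolding r_def using tau_pow_pos tauN_small[OF assms] by auto
  have "germ1 (Mf r) 1"
    unfolding germ1_def using r tr_pos[OF r(1)] by (intro exI[of _ "tau * r"]) (auto intro: Mf_lin)
  then have g2: "germ1 (pw (Mf r) m) (m * 1)" by (rule germ1_pw[OF _ Mf_bij[of N, folded r_def]])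
  have "germ1 (Ef r) 0" using r by (intro germ1_fix[of "1 - r"]) (auto intro: Ef_out)
  then have g1: "germ1 (pw (Ef r) k) (k * 0)" by (rule germ1_pw[OF _ Ef_bij[of N, folded r_def]])
  have "germ1 (pw (Ef r) k \<circ> pw (Mf r) m) (k * 0 + m * 1)" by (rule germ1_comp[OF g1 g2])
  then show ?thesis unfolding TT_def r_def[symmetric] by simp
qed

lemma EM_commute: assumes "2 \<le> N" shows "Ef (tau ^ N) \<circ> Mf (tau ^ N) = Mf (tau ^ N) \<circ> Ef (tau ^ N)"
proof (rule disj_commute)
  show "inj (Ef (tau ^ N))" "inj (Mf (tau ^ N))" using Ef_bij Mf_bij bij_is_inj by blast+
  have r: "0 < tau ^ N" by (rule tau_pow_pos)
  note s = tauN_small[OF assms]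
  show "supp (Ef (tau ^ N)) \<inter> supp (Mf (tau ^ N)) = {}"
  proof (rule ccontr)
    assume "supp (Ef (tau ^ N)) \<inter> supp (Mf (tau ^ N)) \<noteq> {}"
    then obtain x where x: "Ef (tau ^ N) x \<noteq> x" "Mf (tau ^ N) x \<noteq> x" unfolding supp_def by auto
    have "0 < x \<and> x < tau ^ N" using x(1) Ef_out[OF _ r, of x] by linarith
    moreover have "1 - tau ^ N < x" using x(2) Mf_out[OF r, of x] by linarith
    ultimately show False using s by simp
  qed
qed

lemma TT_commute: assumes "2 \<le> N" shows "TT N k m \<circ> TT N k' m' = TT N k' m' \<circ> TT N k m"
proof -
  let ?E = "Ef (tau ^ N)" and ?M = "Mf (tau ^ N)"
  have c1: "pw ?E k \<circ> pw ?E k' = pw ?E k' \<circ> pw ?E k" by (rule commute_pw[OF refl Ef_bij Ef_bij])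
  have c2: "pw ?M m \<circ> pw ?M m' = pw ?M m' \<circ> pw ?M m" by (rule commute_pw[OF refl Mf_bij Mf_bij])
  have c3: "\<And>a b. pw ?E a \<circ> pw ?M b = pw ?M b \<circ> pw ?E a" by (rule commute_pw[OF EM_commute[OF assms] Ef_bij Mf_bij])
  have p1: "\<And>x. pw ?E k (pw ?E k' x) = pw ?E k' (pw ?E k x)" using c1 by (metis comp_apply)
  have p2: "\<And>x. pw ?M m (pw ?M m' x) = pw ?M m' (pw ?M m x)" using c2 by (metis comp_apply)
  have p3: "\<And>a b x. pw ?E a (pw ?M b x) = pw ?M b (pw ?E a x)" using c3 by (metis comp_apply)
  show ?thesis
  proof
    fix x
    have "(TT N k m \<circ> TT N k' m') x = pw ?E k (pw ?M m (pw ?E k' (pw ?M m' x)))" unfolding TT_def by simp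
    also have "\<dots> = pw ?E k (pw ?E k' (pw ?M m (pw ?M m' x)))" by (simp only: p3)
    also have "\<dots> = pw ?E k' (pw ?E k (pw ?M m' (pw ?M m x)))" by (simp only: p1 p2)
    also have "\<dots> = pw ?E k' (pw ?M m' (pw ?E k (pw ?M m x)))" by (simp only: p3)
    also have "\<dots> = (TT N k' m' \<circ> TT N k m) x" unfolding TT_def by simp
    finally show "(TT N k m \<circ> TT N k' m') x = (TT N k' m' \<circ> TT N k m) x" .
  qed
qed



abbreviation "CC \<equiv> commutator_subgroup Ftau"
abbreviation "DD \<equiv> commutator_subgroup (commutator_subgroup Ftau)"

lemma comm_four:
  assumes b: "bij x" "bij y" "bij u" "bij v"
    and c1: "y \<circ> u = u \<circ> y" and c2: "y \<circ> v = v \<circ> y" and c3: "v \<circ> x = x \<circ> v"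
  shows "comm (x \<circ> y) (u \<circ> v) = comm x u"
proof -
  have e1: "\<And>h. y \<circ> (u \<circ> h) = u \<circ> (y \<circ> h)" using c1 by (metis comp_assoc)
  have e2: "\<And>h. y \<circ> (v \<circ> h) = v \<circ> (y \<circ> h)" using c2 by (metis comp_assoc)
  have "inv x \<circ> v = v \<circ> inv x" by (rule commute_inv[OF c3[symmetric] b(1) b(4)])
  then have e3: "\<And>h. v \<circ> (inv x \<circ> h) = inv x \<circ> (v \<circ> h)" by (metis comp_assoc)
  show ?thesis unfolding comm_def using b by (simp add: grp_simps e1 e2 e3)
qed

lemma comm_as_conj:
  assumes "bij b" "bij c"
  shows "comm b c = b \<circ> inv (c \<circ> b \<circ> inv c)"
  unfolding comm_def using assms by (simp add: grp_simps)

lemma comm_right_absorb: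
  assumes "bij b" "bij x" "bij w" "w \<circ> inv b = inv b \<circ> w"
  shows "comm b (x \<circ> w) = comm b x"
proof -
  have e: "\<And>h. w \<circ> (inv b \<circ> h) = inv b \<circ> (w \<circ> h)" using assms(4) by (metis comp_assoc)
  show ?thesis unfolding comm_def using assms(1-3) by (simp add: grp_simps e)
qed

lemma supp_inv_sub: "bij f \<Longrightarrow> supp f \<subseteq> A \<Longrightarrow> supp (inv f) \<subseteq> A"
  using supp_inv by blast

lemma commute_by_supp:
  assumes "bij f" "bij g" "supp f \<subseteq> A" "supp g \<subseteq> B" "A \<inter> B = {}"
  shows "f \<circ> g = g \<circ> f"
  by (rule disj_commute) (use assms bij_is_inj in blast)+

lemma key_cs:
  assumes b: "b \<in> Ftau" and b': "b' \<in> Ftau" and e: "0 < e" "e \<le> 1/2"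
    and sb: "supp b \<subseteq> {e..1-e}" and sb': "supp b' \<subseteq> {e..1-e}"
  shows "comm b b' \<in> DD"
proof -
  obtain n where n: "(Ef 1 ^^ n) (1 - e) < e" using z_push[OF e(1)] by blast
  define c where "c = Ef 1 ^^ n"
  have "Ef (tau ^ 0) \<in> Ftau" by (rule Ef_Ftau)
  then have c: "c \<in> Ftau" unfolding c_def by (intro funpow_Ftau) simp
  define d where "d = mir c"
  have d: "d \<in> Ftau" unfolding d_def by (rule Ftau_mir[OF c])
  have cJ: "0 \<le> c x \<and> c x < e" if x: "x \<in> {e..1-e}" for x
  proof -
    have x01: "x \<in> {0..1}" "1 - e \<in> {0..1}" using x e by auto
    have "c x \<le> c (1 - e)" using Ftau_mono_le[OF c x01] x by simp
    moreover have "c x \<in> {0..1}" by (rule Ftau_range[OF c x01(1)])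
    ultimately show ?thesis using n unfolding c_def by simp
  qed
  have dJ: "1 - e < d x \<and> d x \<le> 1" if x: "x \<in> {e..1-e}" for x
  proof -
    have "1 - x \<in> {e..1-e}" using x by auto
    then have "0 \<le> c (1 - x) \<and> c (1 - x) < e" by (rule cJ)
    then show ?thesis unfolding d_def mir_def by simp
  qed
  have bb: "bij b" "bij b'" "bij c" "bij d" using b b' c d Ftau_bij by auto
  define a1 where "a1 = c \<circ> b \<circ> inv c"
  define a2 where "a2 = d \<circ> b' \<circ> inv d"
  have ba: "bij a1" "bij a2" unfolding a1_def a2_def using bb by (simp_all add: bij_comp bij_imp_bij_inv)
  have "supp a1 = c ` supp b" unfolding a1_def by (rule supp_conj[OF bb(3)])
  also have "\<dots> \<subseteq> {0..<e}" using cJ sb by force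
  finally have s1: "supp (inv a1) \<subseteq> {0..<e}" using supp_inv[OF ba(1)] by simp
  have "supp a2 = d ` supp b'" unfolding a2_def by (rule supp_conj[OF bb(4)])
  also have "\<dots> \<subseteq> {1-e<..1}" using dJ sb' by force
  finally have s2: "supp (inv a2) \<subseteq> {1-e<..1}" using supp_inv[OF ba(2)] by simp
  have bia: "bij (inv a1)" "bij (inv a2)" using ba bij_imp_bij_inv by auto
  have c1: "inv a1 \<circ> b' = b' \<circ> inv a1"
    by (rule commute_by_supp[OF bia(1) bb(2) s1 sb']) auto
  have c2: "inv a1 \<circ> inv a2 = inv a2 \<circ> inv a1"
    by (rule commute_by_supp[OF bia(1) bia(2) s1 s2]) (use e in auto)
  have c3: "inv a2 \<circ> b = b \<circ> inv a2"
    by (rule commute_by_supp[OF bia(2) bb(1) s2 sb]) auto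
  have "comm b b' = comm (b \<circ> inv a1) (b' \<circ> inv a2)"
    by (rule comm_four[OF bb(1) bia(1) bb(2) bia(2) c1 c2 c3, symmetric])
  also have "\<dots> = comm (comm b c) (comm b' d)"
    unfolding a1_def a2_def using comm_as_conj bb by simp
  finally have eq: "comm b b' = comm (comm b c) (comm b' d)" .
  have "comm b c \<in> CC" "comm b' d \<in> CC" using cs_comm' b b' c d by auto
  then show ?thesis unfolding eq by (rule cs_comm')
qed

lemma supp_from_fix:
  assumes "\<And>x. x < e \<or> 1 - e < x \<Longrightarrow> f x = x"
  shows "supp f \<subseteq> {e..1-e}"
proof
  fix x assume "x \<in> supp f"
  then have "f x \<noteq> x" unfolding supp_def by simp
  then have "\<not> (x < e \<or> 1 - e < x)" using assms by blast
  then show "x \<in> {e..1-e}" by auto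
qed

lemma supp_mono_interval: "supp f \<subseteq> {e..1-e} \<Longrightarrow> e' \<le> e \<Longrightarrow> supp f \<subseteq> {e'..1-e'}"
  by auto

lemma key_BF:
  assumes b: "b \<in> Ftau" and x: "x \<in> Ftau" and e: "0 < e" "e \<le> 1/2"
    and sb: "supp b \<subseteq> {e..1-e}"
  shows "comm b x \<in> DD"
proof -
  obtain k where k: "germ0 x k" using Ftau_germ0[OF x] by blast
  obtain m where m: "germ1 x m" using Ftau_germ1[OF x] by blast
  obtain n where n: "tau ^ n < e" using real_arch_pow_inv[OF e(1) tau_lt1] by blast
  define N where "N = n + 2"
  have N2: "2 \<le> N" unfolding N_def by simp
  have "tau ^ N \<le> tau ^ n" unfolding N_def using tau_facts by (intro power_decreasing) auto
  then have tN: "tau ^ N < e" using n by simp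
  define w where "w = TT N (-k) (-m)"
  have w: "w \<in> Ftau" "bij w" unfolding w_def using TT_Ftau TT_bij by auto
  define s where "s = x \<circ> w"
  have s: "s \<in> Ftau" unfolding s_def by (rule Ftau_comp[OF x w(1)])
  have "germ0 s (k + -k)" unfolding s_def w_def by (rule germ0_comp[OF k TT_germ0[OF N2]])
  moreover have "germ1 s (m + -m)" unfolding s_def w_def by (rule germ1_comp[OF m TT_germ1[OF N2]])
  ultimately have "germ0 s 0" "germ1 s 0" by simp_all
  then obtain es where es: "es > 0" "\<And>y. y < es \<or> 1 - es < y \<Longrightarrow> s y = y"
    using germs_cs[OF s] by blast
  define e' where "e' = min e (min es (1/2))"
  have e': "0 < e'" "e' \<le> 1/2" "e' \<le> e" "e' \<le> es" unfolding e'_def using e es by auto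
  have ss: "supp s \<subseteq> {e'..1-e'}" using supp_from_fix[of es s] es(2) e'(4) by auto
  have sb2: "supp b \<subseteq> {e'..1-e'}" using sb e'(3) by auto
  have "comm b s \<in> DD" by (rule key_cs[OF b s e'(1,2) sb2 ss])
  moreover have "w \<circ> inv b = inv b \<circ> w"
  proof (rule commute_by_supp[OF w(2) bij_imp_bij_inv[OF Ftau_bij[OF b]]])
    show "supp w \<subseteq> - {e..1-e}"
    proof
      fix y assume "y \<in> supp w"
      then have "w y \<noteq> y" unfolding supp_def by simp
      then have "\<not> (tau ^ N \<le> y \<and> y \<le> 1 - tau ^ N)" using TT_fix[OF N2] unfolding w_def by blast
      then show "y \<in> - {e..1-e}" using tN by auto
    qed
    show "supp (inv b) \<subseteq> {e..1-e}" using supp_inv[OF Ftau_bij[OF b]] sb by simp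
  qed auto
  then have "comm b s = comm b x" unfolding s_def
    by (rule comm_right_absorb[OF Ftau_bij[OF b] Ftau_bij[OF x] w(2)])
  ultimately show ?thesis by simp
qed

lemma Ftau_cs_part:
  assumes f: "f \<in> Ftau" and k: "germ0 f k" and m: "germ1 f m"
  shows "inv (TT 2 k m) \<circ> f \<in> Ftau \<and> (\<exists>e. 0 < e \<and> e \<le> 1/2 \<and> supp (inv (TT 2 k m) \<circ> f) \<subseteq> {e..1-e})"
proof -
  define t where "t = TT 2 k m"
  have t: "t \<in> Ftau" "bij t" unfolding t_def using TT_Ftau TT_bij by auto
  define b where "b = inv t \<circ> f"
  have b: "b \<in> Ftau" unfolding b_def by (rule Ftau_comp[OF Ftau_inv[OF t(1)] f])
  have "germ0 b (-k + k)" unfolding b_def t_def by (rule germ0_comp[OF germ0_inv[OF TT_germ0 TT_bij] k]) simp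
  moreover have "germ1 b (-m + m)" unfolding b_def t_def by (rule germ1_comp[OF germ1_inv[OF TT_germ1 TT_bij] m]) simp
  ultimately have "germ0 b 0" "germ1 b 0" by simp_all
  then obtain eb where eb: "eb > 0" "\<And>y. y < eb \<or> 1 - eb < y \<Longrightarrow> b y = y"
    using germs_cs[OF b] by blast
  define e where "e = min eb (1/2)"
  have "0 < e" "e \<le> 1/2" "e \<le> eb" unfolding e_def using eb by auto
  moreover have "supp b \<subseteq> {e..1-e}" using supp_from_fix[of eb b] eb(2) \<open>e \<le> eb\<close> by auto
  ultimately show ?thesis using b unfolding b_def t_def by blast
qed

lemma main_comm:
  assumes f: "f \<in> Ftau" and g: "g \<in> Ftau"
  shows "comm f g \<in> DD"
proof -
  obtain k where k: "germ0 f k" using Ftau_germ0[OF f] by blast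
  obtain m where m: "germ1 f m" using Ftau_germ1[OF f] by blast
  obtain k' where k': "germ0 g k'" using Ftau_germ0[OF g] by blast
  obtain m' where m': "germ1 g m'" using Ftau_germ1[OF g] by blast
  define t where "t = TT 2 k m"
  define t' where "t' = TT 2 k' m'"
  have t: "t \<in> Ftau" "bij t" "t' \<in> Ftau" "bij t'" unfolding t_def t'_def using TT_Ftau TT_bij by auto
  define b where "b = inv t \<circ> f"
  define b' where "b' = inv t' \<circ> g"
  obtain e where e: "0 < e" "e \<le> 1/2" "supp b \<subseteq> {e..1-e}" and b: "b \<in> Ftau"
    using Ftau_cs_part[OF f k m] unfolding b_def t_def by blast
  obtain e' where e': "0 < e'" "e' \<le> 1/2" "supp b' \<subseteq> {e'..1-e'}" and b': "b' \<in> Ftau"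
    using Ftau_cs_part[OF g k' m'] unfolding b'_def t'_def by blast
  have fe: "f = t \<circ> b" unfolding b_def using t(2) by (simp add: bij_cancel1)
  have ge: "g = t' \<circ> b'" unfolding b'_def using t(4) by (simp add: bij_cancel1)
  have bb: "bij b" "bij b'" "bij f" "bij g" using b b' f g Ftau_bij by auto
  have tt: "t \<circ> t' = t' \<circ> t" unfolding t_def t'_def by (rule TT_commute) simp
  have "comm f g = (t \<circ> comm b g \<circ> inv t) \<circ> comm t g"
    unfolding fe by (rule comm_prod_left[OF t(2) bb(1) bb(4)])
  also have "comm t g = t' \<circ> comm t b' \<circ> inv t'"
    unfolding ge by (rule comm_prod_right_commuting[OF t(2) t(4) bb(2) tt])
  also have "comm t b' = inv (comm b' t)" by (rule comm_inv[OF t(2) bb(2)])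
  finally have eq: "comm f g = (t \<circ> comm b g \<circ> inv t) \<circ> (t' \<circ> inv (comm b' t) \<circ> inv t')" .
  have "comm b g \<in> DD" by (rule key_BF[OF b g e])
  then have 1: "t \<circ> comm b g \<circ> inv t \<in> DD" by (rule D_conj[OF t(1)])
  have "comm b' t \<in> DD" by (rule key_BF[OF b' t(1) e'])
  then have "inv (comm b' t) \<in> DD" by (rule commutator_subgroup.cs_inv)
  then have 2: "t' \<circ> inv (comm b' t) \<circ> inv t' \<in> DD" by (rule D_conj[OF t(3)])
  show ?thesis unfolding eq by (rule commutator_subgroup.cs_comp[OF 1 2])
qed

theorem mainTheorem17:
  shows "commutator_subgroup (commutator_subgroup Ftau) = commutator_subgroup Ftau"
proof
  show "DD \<subseteq> CC" using D_sub_C by blast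
  show "CC \<subseteq> DD"
  proof
    fix h assume "h \<in> CC"
    then show "h \<in> DD"
    proof (induction rule: commutator_subgroup.induct)
      case cs_id then show ?case by (rule commutator_subgroup.cs_id)
    next
      case (cs_comm f g)
      have "comm f g \<in> DD" by (rule main_comm[OF cs_comm])
      then show ?case unfolding comm_def .
    next
      case (cs_comp h k) show ?case by (rule commutator_subgroup.cs_comp[OF cs_comp.IH])
    next
      case (cs_inv h) show ?case by (rule commutator_subgroup.cs_inv[OF cs_inv.IH])
    qed
  qed
qed


end
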